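(* Let $\mathcal{F}$ be a non-Archimedean local field and fix $\alpha\in\mathcal{F}$ with $\alpha\neq 0$. (a) If $\operatorname{char}\mathcal{F}=0$, then for Haar-almost every $x\in\mathcal{F}$ with $|x|_\mathfrak{p}>1$, the sequence $([\alpha x^n])_{n\ge 1}$ is uniformly distributed in $\mathcal{O}$. (b) If $\operatorname{char}\mathcal{F}=p>0$, then for Haar-almost every $x\in\mathcal{F}$ with $|x|_\mathfrak{p}>1$, the subsequence $([\alpha x^n])_{n\ge 1,\ p\nmid n}$ (indexed by the positive integers $n$ not divisible by $p$, in increasing order) is uniformly distributed in $\mathcal{O}$.
   Context: $\mathcal{F}$ is a non-Archimedean local field (complete w.r.t. a discrete valuation, finite residue field), with normalized valuation $v_\mathfrak{p}$, valuation ring $\mathcal{O}=\{|x|_\mathfrak{p}\le 1\}$, maximal ideal $\mathfrak{p}$, $q=\#\mathcal{O}/\mathfrak{p}$, absolute value $|x|_\mathfrak{p}=q^{-v_\mathfrak{p}(x)}$, and a fixed prime element $\pi$ ($v_\mathfrak{p}(\pi)=1$). Fix a complete set $C\subset\mathcal{O}$ of representatives of $\mathcal{O}/\mathfrak{p}$ with $0\in C$; every $x\in\mathcal{F}$ is uniquely $x=\sum_{n\ge v}c_n\pi^n$ with $c_n\in C$. The integral part is $[x]=\sum_{n\ge 0}c_n\pi^n\in\mathcal{O}$. For $a\in\mathcal{F}$, $k\in\mathbb{Z}$, $D(a,q^k)=\{x:|x-a|_\mathfrak{p}\le q^k\}$. Haar measure $\mu$ on $\mathcal{F}$ is normalized by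 $\mu(\mathcal{O})=1$. A sequence $(x_n)\subset\mathcal{O}$ is uniformly distributed in $\mathcal{O}$ if for every $a\in\mathcal{O}$ and $k\in\mathbb{N}$, $\lim_{N\to\infty}\frac1N\#\{1\le n\le N: x_n\in D(a,q^{-k})\}=q^{-k}$. *)

theory Defs
  imports "HOL-Analysis.Analysis" "HOL-Library.Infinite_Set"
begin

text \<open>A non-Archimedean local field is modelled as a field type 'a together with
 a normalized discrete valuation v (only meaningful on nonzero elements), a fixed prime
 element prm (v prm = 1) and a fixed finite complete set C of representatives of the
 residue field O/p with 0 in C.  q = card C is the size of the residue field.\<close>

definition resq :: "'a set \<Rightarrow> nat" where
  "resq C = card C"

definition absp :: "('a::field \<Rightarrow> int) \<Rightarrow> 'a set \<Rightarrow> 'a \<Rightarrow> real" where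
  "absp v C x = (if x = 0 then 0 else real (resq C) powr (- real_of_int (v x)))"

definition valring :: "('a::field \<Rightarrow> int) \<Rightarrow> 'a set" where
  "valring v = {x. x = 0 \<or> v x \<ge> 0}"

definition maxideal :: "('a::field \<Rightarrow> int) \<Rightarrow> 'a set" where
  "maxideal v = {x. x = 0 \<or> v x \<ge> 1}"

definition disc :: "('a::field \<Rightarrow> int) \<Rightarrow> 'a set \<Rightarrow> 'a \<Rightarrow> int \<Rightarrow> 'a set" where
  "disc v C a k = {x. absp v C (x - a) \<le> real (resq C) powr (real_of_int k)}"

definition nonarch_local_field :: "('a::field \<Rightarrow> int) \<Rightarrow> 'a \<Rightarrow> 'a set \<Rightarrow> bool" where
  "nonarch_local_field v prm C \<longleftrightarrow>
     (\<forall>x y. x \<noteq> 0 \<longrightarrow> y \<noteq> 0 \<longrightarrow> v (x * y) = v x + v y) \<and>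
     (\<forall>x y. x \<noteq> 0 \<longrightarrow> y \<noteq> 0 \<longrightarrow> x + y \<noteq> 0 \<longrightarrow> v (x + y) \<ge> min (v x) (v y)) \<and>
     prm \<noteq> 0 \<and> v prm = 1 \<and>
     finite C \<and> C \<subseteq> valring v \<and> 0 \<in> C \<and>
     (\<forall>x \<in> valring v. \<exists>!c \<in> C. x - c \<in> maxideal v) \<and>
     (\<forall>s :: nat \<Rightarrow> 'a.
        (\<forall>e>0. \<exists>N. \<forall>m\<ge>N. \<forall>n\<ge>N. absp v C (s m - s n) < e) \<longrightarrow>
        (\<exists>l. \<forall>e>0. \<exists>N. \<forall>n\<ge>N. absp v C (s n - l) < e))"

text \<open>Integral part: [x] = sum of c_n prm^n over n \<ge> 0 of the prm-adic expansion of x with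
 digits in C; equivalently the unique y in O such that x - y is the (finite) part
 sum of c_n prm^n over n < 0 of the expansion, with digits in C.\<close>

definition intpart :: "('a::field \<Rightarrow> int) \<Rightarrow> 'a \<Rightarrow> 'a set \<Rightarrow> 'a \<Rightarrow> 'a" where
  "intpart v prm C x = (THE y. y \<in> valring v \<and>
      (\<exists>N::nat. \<exists>c::nat \<Rightarrow> 'a. (\<forall>n. c n \<in> C) \<and>
          x - y = (\<Sum>n\<in>{1..N}. c n * inverse prm ^ n)))"

definition open_p :: "('a::field \<Rightarrow> int) \<Rightarrow> 'a set \<Rightarrow> 'a set \<Rightarrow> bool" where
  "open_p v C U \<longleftrightarrow> (\<forall>x\<in>U. \<exists>e>0. {y. absp v C (y - x) < e} \<subseteq> U)"

text \<open>Haar measure on the additive group, normalized by mu(O) = 1 (a translation invariant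
 Borel measure; finiteness on compacta follows from mu(O)=1 and invariance).\<close>

definition haar_p :: "('a::field \<Rightarrow> int) \<Rightarrow> 'a set \<Rightarrow> 'a measure \<Rightarrow> bool" where
  "haar_p v C M \<longleftrightarrow>
     space M = UNIV \<and> sets M = sigma_sets UNIV {U. open_p v C U} \<and>
     (\<forall>A \<in> sets M. \<forall>a. emeasure M ((\<lambda>x. a + x) ` A) = emeasure M A) \<and>
     emeasure M (valring v) = 1"

definition unif_distr :: "('a::field \<Rightarrow> int) \<Rightarrow> 'a set \<Rightarrow> (nat \<Rightarrow> 'a) \<Rightarrow> bool" where
  "unif_distr v C s \<longleftrightarrow> (\<forall>n\<ge>1. s n \<in> valring v) \<and>
     (\<forall>a \<in> valring v. \<forall>k::nat.
        (\<lambda>N. real (card {n \<in> {1..N}. s n \<in> disc v C a (- int k)}) / real N)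
          \<longlonglongrightarrow> real (resq C) powr (- real k))"

end

theory Submission
  imports Defs "HOL-Computational_Algebra.Euclidean_Algorithm"
begin

locale nalf =
  fixes v :: "'a::field \<Rightarrow> int" and prm :: 'a and C :: "'a set"
  assumes NLF: "nonarch_local_field v prm C"
begin

definition P :: "int \<Rightarrow> 'a set" where "P r = {x. x = 0 \<or> v x \<ge> r}"

abbreviation qq where "qq \<equiv> resq C"

definition pw :: "int \<Rightarrow> 'a" where "pw r = prm powi r"

lemmas NLF' = NLF[unfolded nonarch_local_field_def]
lemmas NLF2 = conjunct2[OF NLF']
lemmas NLF3 = conjunct2[OF NLF2]
lemmas NLF4 = conjunct2[OF NLF3]
lemmas NLF5 = conjunct2[OF NLF4]
lemmas NLF6 = conjunct2[OF NLF5]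
lemmas NLF7 = conjunct2[OF NLF6]
lemmas NLF8 = conjunct2[OF NLF7]
lemmas NLF9 = conjunct2[OF NLF8]

lemma vmult: "x \<noteq> 0 \<Longrightarrow> y \<noteq> 0 \<Longrightarrow> v (x * y) = v x + v y"
  using conjunct1[OF NLF'] by blast

lemma vadd: "x \<noteq> 0 \<Longrightarrow> y \<noteq> 0 \<Longrightarrow> x + y \<noteq> 0 \<Longrightarrow> v (x + y) \<ge> min (v x) (v y)"
  using conjunct1[OF NLF2] by blast

lemma prm_nz: "prm \<noteq> 0" using conjunct1[OF NLF3] .
lemma v_prm: "v prm = 1" using conjunct1[OF NLF4] .
lemma finC: "finite C" using conjunct1[OF NLF5] .
lemma C_O: "C \<subseteq> valring v" using conjunct1[OF NLF6] .
lemma zero_C: "0 \<in> C" using conjunct1[OF NLF7] .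
lemma resid: "\<forall>x \<in> valring v. \<exists>!c \<in> C. x - c \<in> maxideal v" using conjunct1[OF NLF8] .

lemma v1: "v 1 = 0"
  using vmult[of 1 1] by simp

lemma v_neg1: "v (-1) = 0"
  using vmult[of "-1" "-1"] v1 by simp

lemma v_uminus: "v (- x) = v x" if "x \<noteq> 0"
  using vmult[of "-1" x] v_neg1 that by simp

lemma v_inverse: "x \<noteq> 0 \<Longrightarrow> v (inverse x) = - v x"
  using vmult[of x "inverse x"] v1 by simp

lemma v_power: "x \<noteq> 0 \<Longrightarrow> v (x ^ n) = int n * v x"
  by (induction n) (auto simp: v1 vmult algebra_simps)

lemma v_divide: "x \<noteq> 0 \<Longrightarrow> y \<noteq> 0 \<Longrightarrow> v (x / y) = v x - v y"
  by (simp add: divide_inverse vmult v_inverse)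

lemma mem_P: "x \<in> P r \<longleftrightarrow> x = 0 \<or> v x \<ge> r"
  by (simp add: P_def)

lemma P_zero[simp]: "0 \<in> P r"
  by (simp add: P_def)

lemma P_mono: "s \<le> r \<Longrightarrow> x \<in> P r \<Longrightarrow> x \<in> P s"
  by (auto simp: P_def)

lemma P_uminus: "x \<in> P r \<Longrightarrow> - x \<in> P r"
  by (cases "x = 0") (auto simp: P_def v_uminus)

lemma P_uminus_iff[simp]: "- x \<in> P r \<longleftrightarrow> x \<in> P r"
  using P_uminus[of x r] P_uminus[of "-x" r] by auto

lemma P_add: "x \<in> P r \<Longrightarrow> y \<in> P r \<Longrightarrow> x + y \<in> P r"
  unfolding P_def using vadd[of x y] by fastforce

lemma P_diff: "x \<in> P r \<Longrightarrow> y \<in> P r \<Longrightarrow> x - y \<in> P r"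
  using P_add[of x r "-y"] by simp

lemma P_diff_commute: "x - y \<in> P r \<longleftrightarrow> y - x \<in> P r"
  using P_uminus_iff[of "x - y" r] by simp

lemma P_mult: "x \<in> P r \<Longrightarrow> y \<in> P s \<Longrightarrow> x * y \<in> P (r + s)"
  by (cases "x = 0"; cases "y = 0") (auto simp: P_def vmult)

lemma P_sum: "(\<And>i. i \<in> I \<Longrightarrow> f i \<in> P r) \<Longrightarrow> sum f I \<in> P r"
  by (induction I rule: infinite_finite_induct) (auto intro: P_add)

lemma P_trans: "x - y \<in> P r \<Longrightarrow> y - z \<in> P r \<Longrightarrow> x - z \<in> P r"
  using P_add[of "x - y" r "y - z"] by simp

lemma strict: assumes "x \<noteq> 0" "y \<in> P (v x + 1)"
  shows "x + y \<noteq> 0 \<and> v (x + y) = v x"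
proof (cases "y = 0")
  case True thus ?thesis using assms by simp
next
  case False
  hence vy: "v y > v x" using assms by (auto simp: P_def)
  have nz: "x + y \<noteq> 0"
  proof
    assume "x + y = 0" hence "y = - x" by (metis add.commute neg_eq_iff_add_eq_0)
    thus False using vy v_uminus[OF assms(1)] by simp
  qed
  have "v (x + y) \<ge> v x" using vadd[OF assms(1) False nz] vy by simp
  moreover have "v x \<ge> min (v (x + y)) (v (-y))"
    using vadd[of "x + y" "-y"] nz False assms(1) by auto
  hence "v x \<ge> v (x + y)" using vy v_uminus[OF False] by auto
  ultimately show ?thesis using nz by simp
qed

lemma strict_diff: assumes "x \<noteq> 0" "x - y \<in> P (v x + 1)"
  shows "y \<noteq> 0 \<and> v y = v x"
  using strict[OF assms(1), of "y - x"] assms(2) P_diff_commute by auto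

lemma pw_nz[simp]: "pw r \<noteq> 0"
  by (simp add: pw_def prm_nz)

lemma v_pw[simp]: "v (pw r) = r"
proof (cases "r \<ge> 0")
  case True
  then obtain n where "r = int n" by (metis nonneg_eq_int)
  thus ?thesis using v_power[OF prm_nz, of n] v_prm by (simp add: pw_def)
next
  case False
  then obtain n where n: "r = - int n" by (metis nonpos_int_cases linear)
  hence "pw r = inverse (prm ^ n)" by (simp add: pw_def power_int_minus)
  thus ?thesis using v_power[OF prm_nz, of n] v_prm n v_inverse[of "prm ^ n"] prm_nz by simp
qed

lemma pw_add: "pw (a + b) = pw a * pw b"
  by (simp add: pw_def power_int_add prm_nz)

lemma pw_0[simp]: "pw 0 = 1" by (simp add: pw_def)

lemma pw_in_P[simp]: "pw r \<in> P r" by (simp add: P_def)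

lemma valring_P: "valring v = P 0" by (auto simp: valring_def P_def)
lemma maxideal_P: "maxideal v = P 1" by (auto simp: maxideal_def P_def)

lemma P_shift: "x \<in> P r \<longleftrightarrow> x * pw (- r) \<in> P 0"
  by (cases "x = 0") (auto simp: P_def vmult)

lemma C_P0: "c \<in> C \<Longrightarrow> c \<in> P 0"
  using C_O valring_P by auto

lemma resid': "x \<in> P 0 \<Longrightarrow> \<exists>!c \<in> C. x - c \<in> P 1"
  using resid valring_P maxideal_P by auto

lemma C_distinct: "c \<in> C \<Longrightarrow> c' \<in> C \<Longrightarrow> c - c' \<in> P 1 \<Longrightarrow> c = c'"
  using resid'[OF C_P0[of c]] by force

lemma C_unit: "c \<in> C \<Longrightarrow> c \<noteq> 0 \<Longrightarrow> v c = 0"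
proof -
  assume c: "c \<in> C" "c \<noteq> 0"
  have "v c \<ge> 0" using C_P0[OF c(1)] c(2) by (auto simp: P_def)
  moreover have "\<not> v c \<ge> 1"
  proof
    assume "v c \<ge> 1" hence "c - 0 \<in> P 1" by (simp add: P_def)
    thus False using C_distinct[OF c(1) zero_C] c(2) by simp
  qed
  ultimately show ?thesis by simp
qed

lemma digit: assumes "x \<in> P r" shows "\<exists>!c \<in> C. x - c * pw r \<in> P (r + 1)"
proof -
  have "x * pw (-r) \<in> P 0" using assms P_shift by blast
  then obtain c where c: "c \<in> C" "x * pw (-r) - c \<in> P 1" and u: "\<And>c'. c' \<in> C \<Longrightarrow> x * pw (-r) - c' \<in> P 1 \<Longrightarrow> c' = c"
    using resid' by metis
  have eq: "(x - d * pw r) * pw (-(r+1)) = (x * pw (-r) - d) * pw (-1)" for d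
    by (simp add: algebra_simps pw_add[symmetric])
  have iff: "x - d * pw r \<in> P (r + 1) \<longleftrightarrow> x * pw (-r) - d \<in> P 1" for d
  proof -
    have "x - d * pw r \<in> P (r + 1) \<longleftrightarrow> (x * pw (-r) - d) * pw (-1) \<in> P 0"
      using P_shift[of "x - d * pw r" "r+1"] eq by simp
    also have "\<dots> \<longleftrightarrow> x * pw (-r) - d \<in> P 1" using P_shift[of _ 1] by simp
    finally show ?thesis .
  qed
  show ?thesis
  proof (rule ex1I[of _ c])
    show "c \<in> C \<and> x - c * pw r \<in> P (r + 1)" using c iff by blast
    show "\<And>y. y \<in> C \<and> x - y * pw r \<in> P (r + 1) \<Longrightarrow> y = c" using u iff by blast
  qed
qed

lemma one_notin_P1: "1 \<notin> P 1" by (simp add: P_def v1)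

lemma q_ge2: "qq \<ge> 2"
proof -
  obtain c1 where c1: "c1 \<in> C" "1 - c1 \<in> P 1" using resid'[of 1] by (auto simp: P_def v1)
  have "c1 \<noteq> 0" using c1 one_notin_P1 by auto
  hence "{0, c1} \<subseteq> C" "card {0, c1} = 2" using c1 zero_C by auto
  hence "card {0, c1} \<le> card C" using card_mono[OF finC] by blast
  thus ?thesis unfolding resq_def using \<open>card {0, c1} = 2\<close> by simp
qed

lemma q_gt1: "real qq > 1" using q_ge2 by simp

lemma absp_le_iff_int: "absp v C x \<le> real qq powr (real_of_int k) \<longleftrightarrow> x \<in> P (- k)"
proof (cases "x = 0")
  case True thus ?thesis by (simp add: absp_def)
next
  case False
  have "absp v C x \<le> real qq powr (real_of_int k) \<longleftrightarrow> real qq powr (- real_of_int (v x)) \<le> real qq powr (real_of_int k)"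
    using False by (simp add: absp_def)
  also have "\<dots> \<longleftrightarrow> - real_of_int (v x) \<le> real_of_int k"
    by (rule powr_le_cancel_iff[OF q_gt1])
  also have "\<dots> \<longleftrightarrow> x \<in> P (- k)" using False by (auto simp: P_def)
  finally show ?thesis .
qed

lemma absp_less_iff_int: "absp v C x < real qq powr (real_of_int k) \<longleftrightarrow> x \<in> P (1 - k)"
proof (cases "x = 0")
  case True thus ?thesis using q_ge2 by (simp add: absp_def)
next
  case False
  have "absp v C x < real qq powr (real_of_int k) \<longleftrightarrow> real qq powr (- real_of_int (v x)) < real qq powr (real_of_int k)"
    using False by (simp add: absp_def)
  also have "\<dots> \<longleftrightarrow> - real_of_int (v x) < real_of_int k"
    by (rule powr_less_cancel_iff[OF q_gt1])
  also have "\<dots> \<longleftrightarrow> x \<in> P (1 - k)" using False by (auto simp: P_def)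
  finally show ?thesis .
qed

lemma absp_gt1_iff: "absp v C x > 1 \<longleftrightarrow> x \<noteq> 0 \<and> v x < 0"
proof -
  have "absp v C x > 1 \<longleftrightarrow> \<not> absp v C x \<le> real qq powr (real_of_int 0)"
    using q_gt1 by auto
  also have "\<dots> \<longleftrightarrow> x \<notin> P 0" using absp_le_iff_int[of x 0] by simp
  finally show ?thesis by (auto simp: P_def)
qed

lemma disc_eq: "disc v C a (- int k) = {y. y - a \<in> P (int k)}"
  unfolding disc_def using absp_le_iff_int[of _ "- int k"] by simp

end

context nalf begin

lemma pw_cancel: "pw a * pw (- a) = 1"
  using pw_add[of a "-a"] by simp

lemma P_times_pw: "y * pw a \<in> P (a + b) \<Longrightarrow> y \<in> P b"
proof -
  assume "y * pw a \<in> P (a + b)"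
  hence "y * pw a * pw (-a) \<in> P (a + b + - a)" using P_mult pw_in_P by blast
  thus ?thesis using pw_cancel by (simp add: mult.assoc)
qed

definition ball :: "'a \<Rightarrow> int \<Rightarrow> 'a set" where "ball b r = {y. y - b \<in> P r}"

lemma mem_ball: "y \<in> ball b r \<longleftrightarrow> y - b \<in> P r" by (simp add: ball_def)

lemma ball_translate: "ball b r = (\<lambda>x. b + x) ` P r"
proof -
  have "x \<in> (\<lambda>x. b + x) ` P r" if "x - b \<in> P r" for x
    using that by (intro image_eqI[of _ _ "x - b"]) auto
  thus ?thesis unfolding ball_def by auto
qed

lemma ball_center: "y \<in> ball b r \<Longrightarrow> ball y r = ball b r"
  unfolding ball_def using P_trans P_diff_commute by blast

lemma ball_mono: "s \<le> r \<Longrightarrow> ball b r \<subseteq> ball b s"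
  unfolding ball_def using P_mono by blast

primrec Rep :: "int \<Rightarrow> nat \<Rightarrow> 'a set" where
  "Rep lo 0 = {0}"
| "Rep lo (Suc T) = (\<lambda>(r, c). r + c * pw (lo + int T)) ` (Rep lo T \<times> C)"

lemma Rep_P: "r \<in> Rep lo T \<Longrightarrow> r \<in> P lo"
proof (induction T arbitrary: r)
  case 0 thus ?case by simp
next
  case (Suc T)
  then obtain r1 c where rc: "r1 \<in> Rep lo T" "c \<in> C" "r = r1 + c * pw (lo + int T)" by auto
  have "c * pw (lo + int T) \<in> P (0 + (lo + int T))" using P_mult C_P0[OF rc(2)] pw_in_P by blast
  hence "c * pw (lo + int T) \<in> P lo" using P_mono[of lo "lo + int T"] by simp
  thus ?case using Suc.IH[OF rc(1)] rc(3) P_add by simp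
qed

lemma Rep_finite: "finite (Rep lo T)"
  by (induction T) (auto simp: finC)

lemma Rep_decomp: "x \<in> P lo \<Longrightarrow> \<exists>r \<in> Rep lo T. x - r \<in> P (lo + int T)"
proof (induction T)
  case 0 thus ?case by simp
next
  case (Suc T)
  then obtain r where r: "r \<in> Rep lo T" "x - r \<in> P (lo + int T)" by auto
  obtain c where c: "c \<in> C" "x - r - c * pw (lo + int T) \<in> P (lo + int T + 1)"
    using digit[OF r(2)] by blast
  have "r + c * pw (lo + int T) \<in> Rep lo (Suc T)" using r(1) c(1) by force
  moreover have "x - (r + c * pw (lo + int T)) \<in> P (lo + int (Suc T))"
    using c(2) by (simp add: algebra_simps)
  ultimately show ?case by blast
qed

lemma Rep_step_inj:
  assumes "r1 \<in> Rep lo T" "r1' \<in> Rep lo T" "c \<in> C" "c' \<in> C"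
    and IH: "\<And>r r'. r \<in> Rep lo T \<Longrightarrow> r' \<in> Rep lo T \<Longrightarrow> r - r' \<in> P (lo + int T) \<Longrightarrow> r = r'"
    and d: "(r1 + c * pw (lo + int T)) - (r1' + c' * pw (lo + int T)) \<in> P (lo + int T + 1)"
  shows "r1 = r1' \<and> c = c'"
proof -
  have cc: "(c - c') * pw (lo + int T) \<in> P (0 + (lo + int T))"
    using P_mult[OF P_diff[OF C_P0[OF assms(3)] C_P0[OF assms(4)]] pw_in_P] .
  have eq: "r1 - r1' = ((r1 + c * pw (lo + int T)) - (r1' + c' * pw (lo + int T))) - (c - c') * pw (lo + int T)"
    by (simp add: algebra_simps)
  have "r1 - r1' \<in> P (lo + int T)"
    unfolding eq using P_diff[OF P_mono[OF _ d] cc] by simp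
  hence r: "r1 = r1'" using IH assms by blast
  hence "(c - c') * pw (lo + int T) \<in> P (lo + int T + 1)" using d by (simp add: algebra_simps)
  hence "c - c' \<in> P 1" using P_times_pw[of "c - c'" "lo + int T" 1] by simp
  thus ?thesis using r C_distinct assms by blast
qed

lemma Rep_uniq: "r \<in> Rep lo T \<Longrightarrow> r' \<in> Rep lo T \<Longrightarrow> r - r' \<in> P (lo + int T) \<Longrightarrow> r = r'"
proof (induction T arbitrary: r r')
  case 0 thus ?case by simp
next
  case (Suc T)
  obtain r1 c where rc: "r1 \<in> Rep lo T" "c \<in> C" "r = r1 + c * pw (lo + int T)" using Suc.prems by auto
  obtain r1' c' where rc': "r1' \<in> Rep lo T" "c' \<in> C" "r' = r1' + c' * pw (lo + int T)" using Suc.prems by auto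
  have "r1 = r1' \<and> c = c'"
    by (rule Rep_step_inj[OF rc(1) rc'(1) rc(2) rc'(2) Suc.IH]) (use Suc.prems(3) rc(3) rc'(3) in \<open>simp_all add: ac_simps\<close>)
  thus ?case using rc rc' by simp
qed

lemma Rep_card: "card (Rep lo T) = qq ^ T"
proof (induction T)
  case 0 thus ?case by simp
next
  case (Suc T)
  have inj: "inj_on (\<lambda>(r, c). r + c * pw (lo + int T)) (Rep lo T \<times> C)"
  proof (rule inj_onI, clarify)
    fix r1 c r1' c'
    assume as: "r1 \<in> Rep lo T" "c \<in> C" "r1' \<in> Rep lo T" "c' \<in> C"
      "r1 + c * pw (lo + int T) = r1' + c' * pw (lo + int T)"
    show "r1 = r1' \<and> c = c'"
      by (rule Rep_step_inj[OF as(1,3,2,4)]) (use Rep_uniq as(5) in auto)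
  qed
  have "card (Rep lo (Suc T)) = card (Rep lo T \<times> C)"
    by (simp add: card_image[OF inj])
  also have "\<dots> = qq ^ Suc T" using Suc.IH by (simp add: card_cartesian_product resq_def)
  finally show ?case .
qed

lemma ball_partition: "ball b lo = (\<Union>r \<in> Rep lo T. ball (b + r) (lo + int T))"
proof
  show "ball b lo \<subseteq> (\<Union>r \<in> Rep lo T. ball (b + r) (lo + int T))"
  proof
    fix y assume "y \<in> ball b lo"
    then obtain r where "r \<in> Rep lo T" "y - b - r \<in> P (lo + int T)"
      using Rep_decomp[of "y - b" lo T] by (auto simp: mem_ball)
    thus "y \<in> (\<Union>r \<in> Rep lo T. ball (b + r) (lo + int T))" by (auto simp: mem_ball algebra_simps)
  qed
  show "(\<Union>r \<in> Rep lo T. ball (b + r) (lo + int T)) \<subseteq> ball b lo"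
  proof clarify
    fix r y assume "r \<in> Rep lo T" "y \<in> ball (b + r) (lo + int T)"
    hence "r \<in> P lo" "y - (b + r) \<in> P lo" using Rep_P P_mono[of lo "lo + int T"] by (auto simp: mem_ball)
    hence "y - (b + r) + r \<in> P lo" using P_add by blast
    thus "y \<in> ball b lo" by (simp add: mem_ball)
  qed
qed

lemma ball_disjoint: "r \<in> Rep lo T \<Longrightarrow> r' \<in> Rep lo T \<Longrightarrow> r \<noteq> r' \<Longrightarrow>
    ball (b + r) (lo + int T) \<inter> ball (b + r') (lo + int T) = {}"
proof (rule ccontr)
  assume as: "r \<in> Rep lo T" "r' \<in> Rep lo T" "r \<noteq> r'"
    "ball (b + r) (lo + int T) \<inter> ball (b + r') (lo + int T) \<noteq> {}"
  then obtain y where "y - (b + r) \<in> P (lo + int T)" "y - (b + r') \<in> P (lo + int T)" by (auto simp: mem_ball)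
  hence "(y - (b + r')) - (y - (b + r)) \<in> P (lo + int T)" using P_diff by blast
  moreover have "(y - (b + r')) - (y - (b + r)) = r - r'" by (simp add: algebra_simps)
  ultimately have "r - r' \<in> P (lo + int T)" by simp
  thus False using Rep_uniq as by blast
qed

end

context nalf begin

definition fsum :: "(nat \<Rightarrow> 'a) \<Rightarrow> nat \<Rightarrow> 'a" where
  "fsum c N = (\<Sum>n\<in>{1..N}. c n * inverse prm ^ n)"

lemma inv_pow_pw: "inverse prm ^ n = pw (- int n)"
  by (simp add: pw_def power_int_minus power_inverse)

lemma fsum_P: "(\<And>n. c n \<in> C) \<Longrightarrow> fsum c N \<in> P (- int N)"
  unfolding fsum_def
proof (rule P_sum)
  fix n assume c: "\<And>n. c n \<in> C" and n: "n \<in> {1..N}"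
  have "c n * inverse prm ^ n \<in> P (0 + - int n)"
    unfolding inv_pow_pw using P_mult[OF C_P0[OF c] pw_in_P] by blast
  thus "c n * inverse prm ^ n \<in> P (- int N)" using n P_mono[of "- int N" "- int n"] by simp
qed

lemma fsum_Suc: "fsum c (Suc N) = fsum c N + c (Suc N) * inverse prm ^ Suc N"
  unfolding fsum_def by (simp add: sum.cl_ivl_Suc)

lemma fsum_0[simp]: "fsum c 0 = 0" by (simp add: fsum_def)

lemma fsum_pad: "N \<le> M \<Longrightarrow> fsum c N = fsum (\<lambda>n. if n \<le> N then c n else 0) M"
  unfolding fsum_def by (rule sum.mono_neutral_cong_left) auto

lemma fsum_uniq:
  "(\<And>n. c n \<in> C) \<Longrightarrow> (\<And>n. c' n \<in> C) \<Longrightarrow> fsum c N - fsum c' N \<in> P 0 \<Longrightarrow> fsum c N = fsum c' N"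
proof (induction N)
  case 0 thus ?case by simp
next
  case (Suc N)
  define S where "S = fsum c N - fsum c' N"
  define d where "d = c (Suc N) - c' (Suc N)"
  have SP: "S \<in> P (- int N)" unfolding S_def using P_diff fsum_P Suc.prems(1,2) by blast
  have D: "S + d * inverse prm ^ Suc N \<in> P 0"
    using Suc.prems(3) unfolding S_def d_def fsum_Suc by (simp add: algebra_simps)
  have d0: "d = 0"
  proof (rule ccontr)
    assume dnz: "d \<noteq> 0"
    have "d \<in> P 0" unfolding d_def using P_diff C_P0 Suc.prems(1,2) by blast
    moreover have "d \<notin> P 1"
    proof
      assume "d \<in> P 1"
      hence "c (Suc N) = c' (Suc N)" unfolding d_def using C_distinct[OF Suc.prems(1) Suc.prems(2)] by blast
      thus False using dnz unfolding d_def by simp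
    qed
    ultimately have vd: "v d = 0" using dnz by (auto simp: P_def)
    define x where "x = d * inverse prm ^ Suc N"
    have xnz: "x \<noteq> 0" using dnz prm_nz by (simp add: x_def)
    have vx: "v x = - int (Suc N)" unfolding x_def inv_pow_pw using vmult[OF dnz pw_nz] vd by simp
    have "S \<in> P (v x + 1)" using SP vx by simp
    from strict[OF xnz this] have "x + S \<noteq> 0" "v (x + S) = - int (Suc N)" using vx by auto
    hence "x + S \<notin> P 0" by (auto simp: P_def)
    thus False using D by (simp add: x_def add.commute)
  qed
  hence "S \<in> P 0" using D by simp
  hence "fsum c N = fsum c' N" using Suc.IH[OF Suc.prems(1) Suc.prems(2)] unfolding S_def by blast
  thus ?case using d0 unfolding fsum_Suc d_def by simp
qed

lemma intpart_ex_j: "y \<in> P (- int j) \<Longrightarrow> \<exists>zz \<in> (P 0). \<exists>c. (\<forall>n. c n \<in> C) \<and> y - zz = fsum c j"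
proof (induction j arbitrary: y)
  case 0 thus ?case by (intro bexI[of _ y] exI[of _ "\<lambda>_. 0"]) (auto simp: zero_C)
next
  case (Suc j)
  obtain c0 where c0: "c0 \<in> C" "y - c0 * pw (- int (Suc j)) \<in> P (- int (Suc j) + 1)"
    using digit[OF Suc.prems] by blast
  have "y - c0 * pw (- int (Suc j)) \<in> P (- int j)" using c0(2) by simp
  from Suc.IH[OF this] obtain zz c where oc: "zz \<in> P 0" "\<forall>n. c n \<in> C"
    "y - c0 * pw (- int (Suc j)) - zz = fsum c j" by blast
  define c' where "c' = c(Suc j := c0)"
  have c'C: "\<forall>n. c' n \<in> C" using oc(2) c0(1) by (simp add: c'_def)
  have "fsum c' j = fsum c j" unfolding fsum_def c'_def by (rule sum.cong) auto
  hence "fsum c' (Suc j) = fsum c j + c0 * inverse prm ^ Suc j" by (simp add: fsum_Suc c'_def)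
  also have "inverse prm ^ Suc j = pw (- int (Suc j))" by (rule inv_pow_pw)
  finally have f: "fsum c' (Suc j) = fsum c j + c0 * pw (- int (Suc j))" .
  have "y - zz = fsum c j + c0 * pw (- int (Suc j))" using oc(3) by (simp add: algebra_simps)
  hence "y - zz = fsum c' (Suc j)" using f by simp
  thus ?case using oc(1) c'C by blast
qed

lemma intpart_ex: "\<exists>zz \<in> (P 0). \<exists>N c. (\<forall>n. c n \<in> C) \<and> y - zz = fsum c N"
proof (cases "y \<in> P 0")
  case True
  have "(\<forall>n. (\<lambda>_. 0) n \<in> C) \<and> y - y = fsum (\<lambda>_. 0) 0" using zero_C by auto
  hence "\<exists>N c. (\<forall>n. c n \<in> C) \<and> y - y = fsum c N" by (intro exI[where x = "0::nat"] exI[where x = "\<lambda>_. 0::'a"])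
  thus ?thesis using True by blast
next
  case False
  hence "y \<in> P (- int (nat (- v y)))" by (auto simp: P_def)
  thus ?thesis using intpart_ex_j by blast
qed

lemma intpart_uniq:
  assumes "zz \<in> P 0" "\<forall>n. c n \<in> C" "y - zz = fsum c N"
    and "zz' \<in> P 0" "\<forall>n. c' n \<in> C" "y - zz' = fsum c' N'"
  shows "zz = zz'"
proof -
  define M where "M = max N N'"
  define d where "d = (\<lambda>n. if n \<le> N then c n else 0)"
  define d' where "d' = (\<lambda>n. if n \<le> N' then c' n else 0)"
  have e1: "fsum c N = fsum d M" unfolding d_def M_def by (rule fsum_pad) simp
  have e2: "fsum c' N' = fsum d' M" unfolding d'_def M_def by (rule fsum_pad) simp
  have dC: "\<And>n. d n \<in> C" "\<And>n. d' n \<in> C" using assms(2,5) zero_C by (auto simp: d_def d'_def)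
  have "fsum d M - fsum d' M = zz' - zz" using assms(3,6) e1 e2 by (simp add: algebra_simps)
  hence "fsum d M - fsum d' M \<in> P 0" using P_diff assms(1,4) by simp
  hence "fsum d M = fsum d' M" using fsum_uniq dC by blast
  moreover have "zz = y - fsum c N" "zz' = y - fsum c' N'" using assms(3,6) by (simp_all add: algebra_simps)
  ultimately show ?thesis using e1 e2 by simp
qed

lemma intpart_char:
  assumes "zz \<in> P 0" "\<forall>n. c n \<in> C" "y - zz = fsum c N"
  shows "intpart v prm C y = zz"
  unfolding intpart_def
proof (rule the_equality)
  show "zz \<in> valring v \<and> (\<exists>N c. (\<forall>n. c n \<in> C) \<and> y - zz = (\<Sum>n = 1..N. c n * inverse prm ^ n))"
    using assms valring_P by (auto simp: fsum_def)
  fix zz' assume "zz' \<in> valring v \<and> (\<exists>N c. (\<forall>n. c n \<in> C) \<and> y - zz' = (\<Sum>n = 1..N. c n * inverse prm ^ n))"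
  then obtain N' c' where o': "zz' \<in> P 0" "\<forall>n. c' n \<in> C" "y - zz' = fsum c' N'"
    using valring_P by (auto simp: fsum_def)
  show "zz' = zz" using intpart_uniq[OF o'(1) o'(2) o'(3) assms(1) assms(2) assms(3)] .
qed

lemma intpart_P0: "intpart v prm C y \<in> P 0"
proof -
  obtain zz N c where oc: "zz \<in> P 0" "\<forall>n. c n \<in> C" "y - zz = fsum c N" using intpart_ex by blast
  show ?thesis using intpart_char[OF oc] oc(1) by simp
qed

lemma intpart_add: assumes "h \<in> P 0" shows "intpart v prm C (y + h) = intpart v prm C y + h"
proof -
  obtain zz N c where oc: "zz \<in> P 0" "\<forall>n. c n \<in> C" "y - zz = fsum c N" using intpart_ex by blast
  have io: "intpart v prm C y = zz" using intpart_char[OF oc] .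
  have "zz + h \<in> P 0" using P_add oc(1) assms by blast
  moreover have "(y + h) - (zz + h) = fsum c N" using oc(3) by simp
  ultimately have "intpart v prm C (y + h) = zz + h" using intpart_char oc(2) by blast
  thus ?thesis using io by simp
qed

lemma intpart_shift: "y - y' \<in> P k \<Longrightarrow> k \<ge> 0 \<Longrightarrow>
   intpart v prm C y - intpart v prm C y' = y - y'"
  using intpart_add[of "y - y'" y'] P_mono[of 0 k] by simp

end

locale nalf_haar = nalf v prm C for v :: "'a::field \<Rightarrow> int" and prm C +
  fixes M :: "'a measure"
  assumes HAAR: "haar_p v C M"
begin

lemmas HAAR' = HAAR[unfolded haar_p_def]
lemma space_M: "space M = UNIV" using conjunct1[OF HAAR'] .
lemma sets_M: "sets M = sigma_sets UNIV {U. open_p v C U}" using conjunct1[OF conjunct2[OF HAAR']] .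
lemma transl: "A \<in> sets M \<Longrightarrow> emeasure M ((\<lambda>x. a + x) ` A) = emeasure M A"
  using conjunct1[OF conjunct2[OF conjunct2[OF HAAR']]] by blast
lemma meas_O: "emeasure M (P 0) = 1"
  using conjunct2[OF conjunct2[OF conjunct2[OF HAAR']]] valring_P by simp

lemma open_sets: "open_p v C U \<Longrightarrow> U \<in> sets M"
  unfolding sets_M by (rule sigma_sets.Basic) simp

lemma inv_open: assumes "\<And>y h. y \<in> U \<Longrightarrow> h \<in> P r \<Longrightarrow> y + h \<in> U" shows "open_p v C U"
  unfolding open_p_def
proof (intro ballI exI conjI)
  fix y assume y: "y \<in> U"
  show "real qq powr real_of_int (1 - r) > 0" using q_gt1 by simp
  show "{z. absp v C (z - y) < real qq powr real_of_int (1 - r)} \<subseteq> U"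
  proof
    fix z assume "z \<in> {z. absp v C (z - y) < real qq powr real_of_int (1 - r)}"
    hence "z - y \<in> P r" using absp_less_iff_int[of "z - y" "1 - r"] by simp
    from assms[OF y this] show "z \<in> U" by simp
  qed
qed

lemma ball_sets[measurable]: "ball b r \<in> sets M"
proof (rule open_sets, rule inv_open)
  fix y h assume "y \<in> ball b r" "h \<in> P r"
  thus "y + h \<in> ball b r" unfolding mem_ball using P_add[of "y - b" r h] by (simp add: algebra_simps)
qed

lemma P_ball: "P r = ball 0 r" by (simp add: ball_def)

lemma P_sets: "P r \<in> sets M" using ball_sets P_ball by simp

lemma ball_emeasure_P: "emeasure M (ball b r) = emeasure M (P r)"
  using ball_translate[of b r] transl[OF P_sets] by simp

lemma disj_balls: "disjoint_family_on (\<lambda>\<rho>. ball (b + \<rho>) (lo + int T)) (Rep lo T)"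
  unfolding disjoint_family_on_def using ball_disjoint by blast

lemma split_emeasure: "emeasure M (ball b lo) = of_nat (qq ^ T) * emeasure M (P (lo + int T))"
proof -
  have "emeasure M (ball b lo) = emeasure M (\<Union>\<rho>\<in>Rep lo T. ball (b + \<rho>) (lo + int T))"
    using ball_partition[of b lo T] by simp
  also have "\<dots> = (\<Sum>\<rho>\<in>Rep lo T. emeasure M (ball (b + \<rho>) (lo + int T)))"
    by (rule sum_emeasure[symmetric]) (auto simp: disj_balls Rep_finite)
  also have "\<dots> = (\<Sum>\<rho>\<in>Rep lo T. emeasure M (P (lo + int T)))"
    by (simp add: ball_emeasure_P)
  also have "\<dots> = of_nat (qq ^ T) * emeasure M (P (lo + int T))"
    by (simp add: Rep_card)
  finally show ?thesis .
qed

lemma P_emeasure: "emeasure M (P r) = ennreal (real qq powr (- real_of_int r))"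
proof (cases "r \<ge> 0")
  case True
  then obtain T where T: "r = int T" by (metis nonneg_eq_int)
  have "emeasure M (ball 0 0) = of_nat (qq ^ T) * emeasure M (P (0 + int T))" by (rule split_emeasure)
  hence e: "1 = ennreal (real qq ^ T) * emeasure M (P r)" using meas_O P_ball T
    by (simp add: ennreal_of_nat_eq_real_of_nat)
  have qpos: "real qq ^ T > 0" using q_gt1 by simp
  have e2: "ennreal (real qq ^ T) * ennreal (1 / real qq ^ T) = 1"
    using qpos by (simp add: ennreal_mult'[symmetric])
  have "emeasure M (P r) = ennreal (1 / real qq ^ T)"
    using e e2 ennreal_mult_cancel_left[of "ennreal (real qq ^ T)" "emeasure M (P r)" "ennreal (1 / real qq ^ T)"] qpos
    by auto
  also have "1 / real qq ^ T = real qq powr (- real_of_int r)"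
    using q_gt1 T by (simp add: powr_minus powr_realpow divide_inverse)
  finally show ?thesis .
next
  case False
  then obtain T where T: "r = - int T" by (metis nonpos_int_cases linear)
  have "emeasure M (ball 0 r) = of_nat (qq ^ T) * emeasure M (P (r + int T))" by (rule split_emeasure)
  hence "emeasure M (P r) = ennreal (real qq ^ T)" using meas_O P_ball T
    by (simp add: ennreal_of_nat_eq_real_of_nat)
  also have "real qq ^ T = real qq powr (- real_of_int r)"
    using q_gt1 T by (simp add: powr_realpow)
  finally show ?thesis .
qed

lemma ball_emeasure: "emeasure M (ball b r) = ennreal (real qq powr (- real_of_int r))"
  using ball_emeasure_P P_emeasure by simp

lemma ball_measure: "measure M (ball b r) = real qq powr (- real_of_int r)"
  unfolding measure_def using ball_emeasure by simp

lemma ball_fin: "emeasure M (ball b r) \<noteq> \<infinity>"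
  using ball_emeasure by simp

lemma subset_ball_fin: "A \<subseteq> ball b r \<Longrightarrow> emeasure M A \<noteq> \<infinity>"
  using emeasure_mono[of A "ball b r" M] ball_fin ball_sets by (auto simp: top_unique)

lemma partition_sum:
  assumes "\<And>\<rho>. \<rho> \<in> Rep lo T \<Longrightarrow> F \<inter> ball (b + \<rho>) (lo + int T) \<in> sets M"
  shows "F \<inter> ball b lo \<in> sets M"
    and "measure M (F \<inter> ball b lo) = (\<Sum>\<rho>\<in>Rep lo T. measure M (F \<inter> ball (b + \<rho>) (lo + int T)))"
proof -
  have eq: "F \<inter> ball b lo = (\<Union>\<rho>\<in>Rep lo T. F \<inter> ball (b + \<rho>) (lo + int T))"
    using ball_partition[of b lo T] by auto
  have U: "(\<Union>\<rho>\<in>Rep lo T. F \<inter> ball (b + \<rho>) (lo + int T)) \<in> sets M"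
    by (intro sets.finite_UN Rep_finite assms)
  show "F \<inter> ball b lo \<in> sets M" by (subst eq) (rule U)
  have "measure M (\<Union>\<rho>\<in>Rep lo T. F \<inter> ball (b + \<rho>) (lo + int T)) =
      (\<Sum>\<rho>\<in>Rep lo T. measure M (F \<inter> ball (b + \<rho>) (lo + int T)))"
  proof (rule measure_finite_Union)
    show "disjoint_family_on (\<lambda>\<rho>. F \<inter> ball (b + \<rho>) (lo + int T)) (Rep lo T)"
      using disj_balls[of b lo T] unfolding disjoint_family_on_def by blast
    show "\<And>i. i \<in> Rep lo T \<Longrightarrow> emeasure M (F \<inter> ball (b + i) (lo + int T)) \<noteq> \<infinity>"
      using subset_ball_fin by blast
  qed (use assms Rep_finite in auto)
  thus "measure M (F \<inter> ball b lo) = (\<Sum>\<rho>\<in>Rep lo T. measure M (F \<inter> ball (b + \<rho>) (lo + int T)))"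
    using eq by simp
qed

lemma count_lemma:
  assumes "\<And>\<rho> y. \<rho> \<in> Rep lo T \<Longrightarrow> y \<in> ball (b + \<rho>) (lo + int T) \<Longrightarrow> (y \<in> F \<longleftrightarrow> b + \<rho> \<in> F)"
  shows "F \<inter> ball b lo \<in> sets M"
    and "measure M (F \<inter> ball b lo) = real (card {\<rho> \<in> Rep lo T. b + \<rho> \<in> F}) * real qq powr (- real_of_int (lo + int T))"
proof -
  have piece: "F \<inter> ball (b + \<rho>) (lo + int T) = (if b + \<rho> \<in> F then ball (b + \<rho>) (lo + int T) else {})"
    if "\<rho> \<in> Rep lo T" for \<rho> using assms[OF that] by auto
  have ms: "\<And>\<rho>. \<rho> \<in> Rep lo T \<Longrightarrow> F \<inter> ball (b + \<rho>) (lo + int T) \<in> sets M"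
    using piece by simp
  show "F \<inter> ball b lo \<in> sets M" by (rule partition_sum(1)[OF ms])
  have "measure M (F \<inter> ball b lo) = (\<Sum>\<rho>\<in>Rep lo T. measure M (F \<inter> ball (b + \<rho>) (lo + int T)))"
    by (rule partition_sum(2)[OF ms])
  also have "\<dots> = (\<Sum>\<rho>\<in>Rep lo T. if b + \<rho> \<in> F then real qq powr (- real_of_int (lo + int T)) else 0)"
    by (rule sum.cong) (auto simp: piece ball_measure)
  also have "\<dots> = (\<Sum>\<rho>\<in>{\<rho> \<in> Rep lo T. b + \<rho> \<in> F}. real qq powr (- real_of_int (lo + int T)))"
    by (rule sum.inter_filter[symmetric]) (rule Rep_finite)
  also have "\<dots> = real (card {\<rho> \<in> Rep lo T. b + \<rho> \<in> F}) * real qq powr (- real_of_int (lo + int T))"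
    by (rule sum_constant)
  finally show "measure M (F \<inter> ball b lo) = real (card {\<rho> \<in> Rep lo T. b + \<rho> \<in> F}) * real qq powr (- real_of_int (lo + int T))" .
qed

definition Eset :: "'a \<Rightarrow> nat \<Rightarrow> 'a set" where
  "Eset a k = {y. intpart v prm C y - a \<in> P (int k)}"

lemma Eset_inv: assumes "y \<in> Eset a k" "h \<in> P (int k)" shows "y + h \<in> Eset a k"
proof -
  have "intpart v prm C (y + h) = intpart v prm C y + h"
    using intpart_add[of h y] P_mono[of 0 "int k" h] assms(2) by simp
  moreover have "(intpart v prm C y - a) + h \<in> P (int k)"
    using P_add assms unfolding Eset_def by blast
  ultimately show ?thesis unfolding Eset_def by (simp add: algebra_simps)
qed

lemma Eset_inv': "y' - y \<in> P (int k) \<Longrightarrow> (y' \<in> Eset a k \<longleftrightarrow> y \<in> Eset a k)"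
  using Eset_inv[of y a k "y' - y"] Eset_inv[of y' a k "y - y'"] P_diff_commute by auto

lemma Eset_sets[measurable]: "Eset a k \<in> sets M"
  by (rule open_sets, rule inv_open, rule Eset_inv)

lemma Eset_unit_ball: assumes "a \<in> P 0"
  shows "Eset a k \<inter> ball y0 0 = ball (y0 - intpart v prm C y0 + a) (int k)"
proof -
  have "y \<in> Eset a k \<inter> ball y0 0 \<longleftrightarrow> y \<in> ball (y0 - intpart v prm C y0 + a) (int k)" for y
  proof
    assume y: "y \<in> Eset a k \<inter> ball y0 0"
    hence eq: "intpart v prm C y = intpart v prm C y0 + (y - y0)"
      using intpart_add[of "y - y0" y0] by (simp add: mem_ball)
    have e: "y - (y0 - intpart v prm C y0 + a) = intpart v prm C y - a"
      by (subst eq) (simp add: algebra_simps)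
    show "y \<in> ball (y0 - intpart v prm C y0 + a) (int k)"
      unfolding mem_ball e using y by (simp add: Eset_def)
  next
    assume y: "y \<in> ball (y0 - intpart v prm C y0 + a) (int k)"
    hence "y - (y0 - intpart v prm C y0 + a) \<in> P 0" using P_mono[of 0 "int k"] by (simp add: mem_ball)
    hence "y - (y0 - intpart v prm C y0 + a) + (a - intpart v prm C y0) \<in> P 0"
      using P_add P_diff[OF assms intpart_P0] by blast
    hence yb: "y - y0 \<in> P 0" by (simp add: algebra_simps)
    hence eq: "intpart v prm C y = intpart v prm C y0 + (y - y0)"
      using intpart_add[of "y - y0" y0] by simp
    have e: "y - (y0 - intpart v prm C y0 + a) = intpart v prm C y - a"
      by (subst eq) (simp add: algebra_simps)
    have "intpart v prm C y - a \<in> P (int k)" using y unfolding mem_ball e .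
    thus "y \<in> Eset a k \<inter> ball y0 0" using yb by (simp add: mem_ball Eset_def)
  qed
  thus ?thesis by blast
qed

lemma Eset_ball_measure: assumes "a \<in> P 0" "l \<le> 0"
  shows "measure M (Eset a k \<inter> ball z l) = real qq powr (- real_of_int l - real k)"
proof -
  define T where "T = nat (- l)"
  have lT: "l + int T = 0" using assms(2) by (simp add: T_def)
  have "measure M (Eset a k \<inter> ball z l) = (\<Sum>\<rho>\<in>Rep l T. measure M (Eset a k \<inter> ball (z + \<rho>) (l + int T)))"
    by (rule partition_sum(2)) simp
  also have "\<dots> = (\<Sum>\<rho>\<in>Rep l T. real qq powr (- real k))"
    by (rule sum.cong) (simp_all add: lT Eset_unit_ball[OF assms(1)] ball_measure)
  also have "\<dots> = real qq ^ T * real qq powr (- real k)" by (simp add: Rep_card)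
  also have "\<dots> = real qq powr (- real_of_int l - real k)"
    using q_gt1 assms(2) by (simp add: T_def powr_realpow[symmetric] powr_add[symmetric])
  finally show ?thesis .
qed

end

context nalf begin

lemma P_pow: "x \<in> P r \<Longrightarrow> x ^ j \<in> P (int j * r)"
proof (induction j)
  case 0 thus ?case by (cases "r \<le> 0") (auto simp: P_def v1)
next
  case (Suc j)
  have "x * x ^ j \<in> P (r + int j * r)" using P_mult[OF Suc.prems Suc.IH[OF Suc.prems]] .
  thus ?case by (simp add: algebra_simps)
qed

lemma P_self: "x \<noteq> 0 \<Longrightarrow> x \<in> P (v x)" by (simp add: P_def)

lemma LP_base:
  assumes x1: "x1 \<in> P (- m)" and u: "u - x1 \<in> P S" and S: "S \<ge> - m"
  shows "u ^ j - x1 ^ j \<in> P (S + m - m * int j)"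
proof (induction j)
  case 0 thus ?case by simp
next
  case (Suc j)
  have uP: "u \<in> P (- m)" using P_add[OF x1 P_mono[OF S u]] by simp
  have e: "u ^ Suc j - x1 ^ Suc j = u * (u ^ j - x1 ^ j) + (u - x1) * x1 ^ j" by (simp add: algebra_simps)
  have t1: "u * (u ^ j - x1 ^ j) \<in> P (- m + (S + m - m * int j))" using P_mult[OF uP Suc.IH] .
  have t2: "(u - x1) * x1 ^ j \<in> P (S + int j * - m)" using P_mult[OF u P_pow[OF x1]] .
  have "S + m - m * int (Suc j) \<le> - m + (S + m - m * int j)" "S + m - m * int (Suc j) \<le> S + int j * - m"
    by (simp_all add: algebra_simps)
  hence "u * (u ^ j - x1 ^ j) \<in> P (S + m - m * int (Suc j))" "(u - x1) * x1 ^ j \<in> P (S + m - m * int (Suc j))"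
    using P_mono t1 t2 by blast+
  thus ?case using e P_add by simp
qed

lemma LP:
  assumes x1: "x1 \<in> P (- m)" and u: "u - x1 \<in> P S" and u': "u' - x1 \<in> P S" and S: "S \<ge> - m"
  shows "u ^ i * u' ^ j - x1 ^ (i + j) \<in> P (S + m - m * int (i + j))"
proof (induction i)
  case 0 thus ?case using LP_base[OF x1 u' S] by simp
next
  case (Suc i)
  have uP: "u \<in> P (- m)" using P_add[OF x1 P_mono[OF S u]] by simp
  have e: "u ^ Suc i * u' ^ j - x1 ^ (Suc i + j) = u * (u ^ i * u' ^ j - x1 ^ (i + j)) + (u - x1) * x1 ^ (i + j)"
    by (simp add: algebra_simps)
  have t1: "u * (u ^ i * u' ^ j - x1 ^ (i + j)) \<in> P (- m + (S + m - m * int (i + j)))" using P_mult[OF uP Suc.IH] .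
  have t2: "(u - x1) * x1 ^ (i + j) \<in> P (S + int (i + j) * - m)" using P_mult[OF u P_pow[OF x1]] .
  have "S + m - m * int (Suc i + j) \<le> - m + (S + m - m * int (i + j))" "S + m - m * int (Suc i + j) \<le> S + int (i + j) * - m"
    by (simp_all add: algebra_simps)
  hence "u * (u ^ i * u' ^ j - x1 ^ (i + j)) \<in> P (S + m - m * int (Suc i + j))" "(u - x1) * x1 ^ (i + j) \<in> P (S + m - m * int (Suc i + j))"
    using P_mono t1 t2 by blast+
  thus ?case using e P_add by simp
qed

lemma pow_diff_const:
  assumes x1: "x1 \<in> P (- m)" and u: "u - x1 \<in> P S" and u': "u' - x1 \<in> P S" and S: "S \<ge> - m"
  shows "u ^ n - u' ^ n \<in> P (S + m - m * int n)"
proof -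
  have "u ^ n - x1 ^ n \<in> P (S + m - m * int n)" "u' ^ n - x1 ^ n \<in> P (S + m - m * int n)"
    using LP_base[OF x1 u S] LP_base[OF x1 u' S] by auto
  from P_diff[OF this] show ?thesis by simp
qed

lemma NL:
  assumes x1nz: "x1 \<noteq> 0" and vx1: "v x1 = - m" and u: "u - x1 \<in> P S" and u': "u' - x1 \<in> P S" and S: "S \<ge> - m"
    and n: "n \<ge> 1" and nnz: "(of_nat n :: 'a) \<noteq> 0" and w: "S + m > v (of_nat n)"
    and al: "\<alpha> \<noteq> 0" and uu: "u \<noteq> u'"
  shows "\<alpha> * u ^ n - \<alpha> * u' ^ n \<noteq> 0 \<and>
    v (\<alpha> * u ^ n - \<alpha> * u' ^ n) = v \<alpha> + v (of_nat n) - m * int (n - 1) + v (u - u')"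
proof -
  have x1: "x1 \<in> P (- m)" using vx1 by (simp add: P_def)
  define Q where "Q = (\<Sum>i<n. u' ^ (n - Suc i) * u ^ i)"
  have fact: "u ^ n - u' ^ n = (u - u') * Q" unfolding Q_def by (rule power_diff_sumr2)
  define N0 where "N0 = (of_nat n :: 'a) * x1 ^ (n - 1)"
  have N0nz: "N0 \<noteq> 0" using nnz x1nz by (simp add: N0_def)
  have vN0: "v N0 = v (of_nat n) - m * int (n - 1)"
    using vmult[OF nnz] x1nz v_power[OF x1nz] vx1 by (simp add: N0_def)
  have "Q - N0 = (\<Sum>i<n. u' ^ (n - Suc i) * u ^ i - x1 ^ (n - 1))"
    by (simp add: Q_def N0_def sum_subtractf)
  also have "\<dots> \<in> P (S + m - m * int (n - 1))"
  proof (rule P_sum)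
    fix i assume "i \<in> {..<n}"
    hence "n - Suc i + i = n - 1" by simp
    thus "u' ^ (n - Suc i) * u ^ i - x1 ^ (n - 1) \<in> P (S + m - m * int (n - 1))"
      using LP[OF x1 u' u S, of "n - Suc i" i] by simp
  qed
  finally have QN0: "Q - N0 \<in> P (S + m - m * int (n - 1))" .
  have "v N0 + 1 \<le> S + m - m * int (n - 1)" using vN0 w by simp
  from P_mono[OF this QN0] have QN: "Q - N0 \<in> P (v N0 + 1)" .
  have "N0 + (Q - N0) \<noteq> 0 \<and> v (N0 + (Q - N0)) = v N0" by (rule strict[OF N0nz QN])
  hence Qnz: "Q \<noteq> 0" and vQ: "v Q = v N0" by auto
  have uunz: "u - u' \<noteq> 0" using uu by simp
  have eq: "\<alpha> * u ^ n - \<alpha> * u' ^ n = \<alpha> * ((u - u') * Q)"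
    using arg_cong[OF fact, of "\<lambda>t. \<alpha> * t"] by (simp add: right_diff_distrib)
  show ?thesis unfolding eq using al uunz Qnz vQ vN0 by (simp add: vmult)
qed

end

context nalf_haar begin

definition Fset :: "'a \<Rightarrow> nat \<Rightarrow> 'a \<Rightarrow> nat \<Rightarrow> 'a set" where
  "Fset \<alpha> n a k = {x. \<alpha> * x ^ n \<in> Eset a k}"

lemma Fset_const:
  assumes x1: "x1 \<in> P (- m)" and S: "S \<ge> - m" and al: "\<alpha> \<noteq> 0"
    and Sk: "v \<alpha> + S + m - m * int n \<ge> int k"
    and y: "y \<in> ball x1 S"
  shows "y \<in> Fset \<alpha> n a k \<longleftrightarrow> x1 \<in> Fset \<alpha> n a k"
proof -
  have "y ^ n - x1 ^ n \<in> P (S + m - m * int n)"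
    using pow_diff_const[OF x1 _ _ S, of y x1 n] y by (simp add: mem_ball)
  hence "\<alpha> * (y ^ n - x1 ^ n) \<in> P (v \<alpha> + (S + m - m * int n))" using P_mult[OF P_self[OF al]] by blast
  hence h: "\<alpha> * y ^ n - \<alpha> * x1 ^ n \<in> P (v \<alpha> + (S + m - m * int n))" by (simp add: algebra_simps)
  have "int k \<le> v \<alpha> + (S + m - m * int n)" using Sk by simp
  from P_mono[OF this h] have "\<alpha> * y ^ n - \<alpha> * x1 ^ n \<in> P (int k)" .
  thus ?thesis unfolding Fset_def using Eset_inv' by simp
qed

lemma card_eq_inj_surj:
  assumes "inj_on f A" "f ` A \<subseteq> B" "finite B" "card A = card B"
  shows "f ` A = B"
  using assms by (metis card_image card_subset_eq)

lemma Fset_fraction: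
  assumes a: "a \<in> P 0" and al: "\<alpha> \<noteq> 0" and x1nz: "x1 \<noteq> 0" and vx1: "v x1 = - m"
    and S: "S \<ge> - m" and n: "n \<ge> 1" and nnz: "(of_nat n :: 'a) \<noteq> 0" and w: "S + m > v (of_nat n)"
    and vL: "v \<alpha> + v (of_nat n) - m * int (n - 1) + S \<le> 0"
  shows "Fset \<alpha> n a k \<inter> ball x1 S \<in> sets M"
    and "measure M (Fset \<alpha> n a k \<inter> ball x1 S) = real qq powr (- real_of_int S - real k)"
proof -
  define L where "L = v \<alpha> + v (of_nat n) - m * int (n - 1) + S"
  define T where "T = nat (int k - L)"
  have LT: "L + int T = int k" using vL by (simp add: T_def L_def)
  define F where "F = Fset \<alpha> n a k"
  define E where "E = Eset a k"
  define f where "f = (\<lambda>y. \<alpha> * y ^ n)"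
  have NL': "f y - f y' \<noteq> 0 \<and> v (f y - f y') = L - S + v (y - y')"
    if "y \<in> ball x1 S" "y' \<in> ball x1 S" "y \<noteq> y'" for y y'
    using NL[OF x1nz vx1 _ _ S n nnz w al that(3)] that unfolding f_def L_def mem_ball by simp
  have inball: "x1 + \<rho> \<in> ball x1 S" if "\<rho> \<in> Rep S T" for \<rho>
    using Rep_P[OF that] by (simp add: mem_ball)
  have inball2: "y \<in> ball x1 S" if "\<rho> \<in> Rep S T" "y \<in> ball (x1 + \<rho>) (S + int T)" for \<rho> y
  proof -
    have "y - (x1 + \<rho>) \<in> P S" using that(2) P_mono[of S "S + int T"] by (simp add: mem_ball)
    hence "y - (x1 + \<rho>) + \<rho> \<in> P S" using P_add Rep_P[OF that(1)] by blast
    thus ?thesis by (simp add: mem_ball)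
  qed
  have fdiff: "f y - f y' \<in> P (L - S + v (y - y'))" if "y \<in> ball x1 S" "y' \<in> ball x1 S" "y \<noteq> y'" for y y'
    using NL'[OF that] by (simp add: P_def)
  have hyp1: "y \<in> F \<longleftrightarrow> x1 + \<rho> \<in> F" if "\<rho> \<in> Rep S T" "y \<in> ball (x1 + \<rho>) (S + int T)" for \<rho> y
  proof (cases "y = x1 + \<rho>")
    case True thus ?thesis by simp
  next
    case False
    have d: "y - (x1 + \<rho>) \<in> P (S + int T)" using that(2) by (simp add: mem_ball)
    have "v (y - (x1 + \<rho>)) \<ge> S + int T" using d False by (simp add: P_def)
    hence le: "int k \<le> L - S + v (y - (x1 + \<rho>))" using LT by simp
    have "f y - f (x1 + \<rho>) \<in> P (int k)"
      using P_mono[OF le fdiff[OF inball2[OF that] inball[OF that(1)] False]] .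
    thus ?thesis unfolding F_def Fset_def using Eset_inv' f_def by simp
  qed
  note CL = count_lemma[of S T x1 F, OF hyp1]
  show "Fset \<alpha> n a k \<inter> ball x1 S \<in> sets M" using CL(1) F_def by simp
  have m1: "measure M (F \<inter> ball x1 S) = real (card {\<rho> \<in> Rep S T. x1 + \<rho> \<in> F}) * real qq powr (- real_of_int (S + int T))"
    by (rule CL(2))
  define z where "z = f x1"
  have fz: "f (x1 + \<rho>) - z \<in> P L" if "\<rho> \<in> Rep S T" for \<rho>
  proof (cases "\<rho> = 0")
    case True thus ?thesis by (simp add: z_def)
  next
    case False
    have "v \<rho> \<ge> S" using Rep_P[OF that] False by (simp add: P_def)
    moreover have "x1 \<in> ball x1 S" by (simp add: mem_ball)
    ultimately have h: "f (x1 + \<rho>) - f x1 \<in> P (L - S + v (x1 + \<rho> - x1))"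
      using fdiff[OF inball[OF that] \<open>x1 \<in> ball x1 S\<close>] False by simp
    have "L \<le> L - S + v (x1 + \<rho> - x1)" using \<open>v \<rho> \<ge> S\<close> by simp
    from P_mono[OF this h] show ?thesis unfolding z_def .
  qed
  define \<phi> where "\<phi> = (\<lambda>\<rho>. SOME \<rho>'. \<rho>' \<in> Rep L T \<and> f (x1 + \<rho>) - z - \<rho>' \<in> P (int k))"
  have phi: "\<phi> \<rho> \<in> Rep L T \<and> f (x1 + \<rho>) - z - \<phi> \<rho> \<in> P (int k)" if "\<rho> \<in> Rep S T" for \<rho>
  proof -
    have "\<exists>\<rho>'. \<rho>' \<in> Rep L T \<and> f (x1 + \<rho>) - z - \<rho>' \<in> P (int k)"
      using Rep_decomp[OF fz[OF that], of T] LT by auto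
    thus ?thesis unfolding \<phi>_def by (rule someI_ex)
  qed
  have inj: "inj_on \<phi> (Rep S T)"
  proof (rule inj_onI, rule ccontr)
    fix r1 r2 assume r: "r1 \<in> Rep S T" "r2 \<in> Rep S T" "\<phi> r1 = \<phi> r2" "r1 \<noteq> r2"
    have "(f (x1 + r1) - z - \<phi> r1) - (f (x1 + r2) - z - \<phi> r2) \<in> P (int k)"
      using P_diff phi r(1,2) by blast
    hence d: "f (x1 + r1) - f (x1 + r2) \<in> P (int k)" using r(3) by simp
    have ne: "x1 + r1 \<noteq> x1 + r2" using r(4) by simp
    have "f (x1 + r1) - f (x1 + r2) \<noteq> 0 \<and> v (f (x1 + r1) - f (x1 + r2)) = L - S + v (r1 - r2)"
      using NL'[OF inball[OF r(1)] inball[OF r(2)] ne] by simp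
    hence "v (r1 - r2) \<ge> S + int T" using d LT by (simp add: P_def)
    hence "r1 - r2 \<in> P (S + int T)" by (simp add: P_def)
    thus False using Rep_uniq r by blast
  qed
  have img: "\<phi> ` Rep S T = Rep L T"
    by (rule card_eq_inj_surj[OF inj]) (use phi Rep_finite in \<open>auto simp: Rep_card card_image[OF inj]\<close>)
  have setEq: "\<phi> ` {\<rho> \<in> Rep S T. x1 + \<rho> \<in> F} = {\<rho>' \<in> Rep L T. z + \<rho>' \<in> E}"
  proof -
    have iff: "x1 + \<rho> \<in> F \<longleftrightarrow> z + \<phi> \<rho> \<in> E" if "\<rho> \<in> Rep S T" for \<rho>
    proof -
      have "f (x1 + \<rho>) - (z + \<phi> \<rho>) \<in> P (int k)" using phi[OF that] by (simp add: algebra_simps)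
      thus ?thesis unfolding F_def Fset_def E_def using Eset_inv' f_def by simp
    qed
    show ?thesis
    proof
      show "\<phi> ` {\<rho> \<in> Rep S T. x1 + \<rho> \<in> F} \<subseteq> {\<rho>' \<in> Rep L T. z + \<rho>' \<in> E}"
        using iff img by auto
      show "{\<rho>' \<in> Rep L T. z + \<rho>' \<in> E} \<subseteq> \<phi> ` {\<rho> \<in> Rep S T. x1 + \<rho> \<in> F}"
      proof
        fix \<rho>' assume "\<rho>' \<in> {\<rho>' \<in> Rep L T. z + \<rho>' \<in> E}"
        hence r': "\<rho>' \<in> \<phi> ` Rep S T" "z + \<rho>' \<in> E" using img by auto
        then obtain \<rho> where r: "\<rho> \<in> Rep S T" "\<rho>' = \<phi> \<rho>" by blast
        hence "\<rho> \<in> Rep S T" "\<rho>' = \<phi> \<rho>" "z + \<phi> \<rho> \<in> E" using r'(2) by auto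
        thus "\<rho>' \<in> \<phi> ` {\<rho> \<in> Rep S T. x1 + \<rho> \<in> F}" using iff by auto
      qed
    qed
  qed
  have cardEq: "card {\<rho> \<in> Rep S T. x1 + \<rho> \<in> F} = card {\<rho>' \<in> Rep L T. z + \<rho>' \<in> E}"
    using card_image[OF inj_on_subset[OF inj, of "{\<rho> \<in> Rep S T. x1 + \<rho> \<in> F}"]] setEq by auto
  have hyp2: "y \<in> E \<longleftrightarrow> z + \<rho>' \<in> E" if "\<rho>' \<in> Rep L T" "y \<in> ball (z + \<rho>') (L + int T)" for \<rho>' y
    using that LT Eset_inv' unfolding E_def by (simp add: mem_ball)
  have m2: "measure M (E \<inter> ball z L) = real (card {\<rho>' \<in> Rep L T. z + \<rho>' \<in> E}) * real qq powr (- real_of_int (L + int T))"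
    by (rule count_lemma(2)[OF hyp2])
  have m3: "measure M (E \<inter> ball z L) = real qq powr (- real_of_int L - real k)"
    unfolding E_def by (rule Eset_ball_measure[OF a]) (use vL L_def in simp)
  have qk: "real qq powr (- real k) > 0" using q_gt1 by simp
  have cnt: "real (card {\<rho>' \<in> Rep L T. z + \<rho>' \<in> E}) = real qq powr (- real_of_int L)"
  proof -
    have "real (card {\<rho>' \<in> Rep L T. z + \<rho>' \<in> E}) * real qq powr (- real k) = real qq powr (- real_of_int L) * real qq powr (- real k)"
      using m2 m3 LT by (simp add: powr_add[symmetric])
    thus ?thesis using qk by simp
  qed
  have "measure M (F \<inter> ball x1 S) = real qq powr (- real_of_int L) * real qq powr (- real_of_int (S + int T))"
    using m1 cardEq cnt by simp
  also have "\<dots> = real qq powr (- real_of_int S - real k)"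
  proof -
    have "real_of_int L + real T = real k" using arg_cong[OF LT, of real_of_int] by simp
    hence e: "- real_of_int L + - real_of_int (S + int T) = - real_of_int S - real k" by simp
    have "real qq powr (- real_of_int L) * real qq powr (- real_of_int (S + int T)) = real qq powr (- real_of_int L + - real_of_int (S + int T))"
      by (rule powr_add[symmetric])
    thus ?thesis by (simp only: e)
  qed
  finally show "measure M (Fset \<alpha> n a k \<inter> ball x1 S) = real qq powr (- real_of_int S - real k)"
    using F_def by simp
qed

end

context nalf begin
lemma of_nat_P0: "(of_nat n :: 'a) \<in> P 0"
proof (induction n)
  case 0 thus ?case by simp
next
  case (Suc n)
  have "(1::'a) \<in> P 0" by (simp add: P_def v1)
  thus ?case using P_add[OF Suc.IH] by (simp add: add.commute)
qed

lemma v_of_nat_nonneg: "(of_nat n :: 'a) \<noteq> 0 \<Longrightarrow> v (of_nat n) \<ge> 0"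
  using of_nat_P0[of n] by (simp add: P_def)
end

locale shell = nalf_haar v prm C M for v :: "'a::field \<Rightarrow> int" and prm C M +
  fixes \<alpha> x0 :: 'a and m :: int and a :: 'a and k :: nat and s :: "nat \<Rightarrow> nat"
  assumes al: "\<alpha> \<noteq> 0" and x0nz: "x0 \<noteq> 0" and vx0: "v x0 = - m" and m1: "m \<ge> 1"
    and aP: "a \<in> P 0" and smono: "strict_mono s" and s1: "\<And>j. s j \<ge> 1"
    and snz: "\<And>j. (of_nat (s j) :: 'a) \<noteq> 0"
begin

definition "B = ball x0 (1 - m)"
definition "Fj j = Fset \<alpha> (s j) a k"
definition "cc = real qq powr (- real k)"
definition "w j = v (of_nat (s j) :: 'a)"
definition "Kc = int k + \<bar>v \<alpha>\<bar> + 1"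
definition "good i j \<longleftrightarrow> i < j \<and> int (s j) - int (s i) \<ge> Kc + 2 * w j"

lemma w_nonneg: "w j \<ge> 0" unfolding w_def using v_of_nat_nonneg snz by blast

lemma B_shell: assumes "x1 \<in> B" shows "x1 \<noteq> 0" "v x1 = - m" "x1 \<in> P (- m)"
proof -
  have "x0 - x1 \<in> P (v x0 + 1)" using assms P_diff_commute vx0 by (simp add: B_def mem_ball)
  from strict_diff[OF x0nz this] show "x1 \<noteq> 0" "v x1 = - m" using vx0 by auto
  thus "x1 \<in> P (- m)" by (simp add: P_def)
qed

lemma piece_in_B: "\<rho> \<in> Rep (1 - m) T \<Longrightarrow> x0 + \<rho> \<in> B"
  using Rep_P by (simp add: B_def mem_ball)

lemma B_sets[measurable]: "B \<in> sets M" by (simp add: B_def)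

lemma B_measure: "measure M B = real qq powr (real_of_int (m - 1))"
  by (simp add: B_def ball_measure)

lemma B_fin: "emeasure M B < \<infinity>" using ball_fin by (simp add: B_def less_top)

lemma const_piece:
  assumes "\<rho> \<in> Rep (1 - m) T" "S = 1 - m + int T" "S \<ge> int k - v \<alpha> + m * int n"
  shows "Fset \<alpha> n a k \<inter> ball (x0 + \<rho>) S = (if x0 + \<rho> \<in> Fset \<alpha> n a k then ball (x0 + \<rho>) S else {})"
proof -
  have x1: "x0 + \<rho> \<in> P (- m)" using B_shell(3)[OF piece_in_B[OF assms(1)]] .
  have "y \<in> Fset \<alpha> n a k \<longleftrightarrow> x0 + \<rho> \<in> Fset \<alpha> n a k" if "y \<in> ball (x0 + \<rho>) S" for y
    by (rule Fset_const[OF x1 _ al _ that]) (use assms(2,3) m1 in auto)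
  thus ?thesis by auto
qed

lemma Fset_B_sets: "Fset \<alpha> n a k \<inter> B \<in> sets M"
proof -
  define S where "S = max (1 - m) (int k - v \<alpha> + m * int n)"
  define T where "T = nat (S - (1 - m))"
  have ST: "S = 1 - m + int T" by (simp add: T_def S_def)
  have "Fset \<alpha> n a k \<inter> ball (x0 + \<rho>) (1 - m + int T) \<in> sets M" if "\<rho> \<in> Rep (1 - m) T" for \<rho>
    using const_piece[OF that ST] ST S_def by simp
  from partition_sum(1)[OF this] show ?thesis by (simp add: B_def)
qed

lemma Fj_B_sets[measurable]: "Fj j \<inter> B \<in> sets M" by (simp add: Fj_def Fset_B_sets)

lemma good_measure:
  assumes "good i j"
  shows "measure M (Fj j \<inter> B) = cc * measure M B"
    and "measure M (Fj i \<inter> (Fj j \<inter> B)) = cc * measure M (Fj i \<inter> B)"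
proof -
  have ij: "i < j" and d: "int (s j) - int (s i) \<ge> Kc + 2 * w j" using assms by (auto simp: good_def)
  define S where "S = max (int k - v \<alpha> + m * int (s i)) (max (w j - m + 1) (1 - m))"
  define T where "T = nat (S - (1 - m))"
  have S1: "S \<ge> 1 - m" unfolding S_def by (simp add: le_max_iff_disj)
  have ST: "S = 1 - m + int T" using S1 by (simp add: T_def)
  have wj: "w j \<ge> 0" by (rule w_nonneg)
  have sj1: "int (s j) \<ge> 1" using s1[of j] by simp
  have msj: "m * int (s j) \<ge> int (s j)" using m1 sj1 by (simp add: mult_right_mono[of 1 m "int (s j)", simplified])
  have md: "m * (int (s j) - int (s i) - 1) \<ge> int (s j) - int (s i) - 1"
  proof -
    have "int (s j) - int (s i) - 1 \<ge> 0" using d w_nonneg[of j] by (simp add: Kc_def)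
    thus ?thesis using m1 mult_right_mono[of 1 m "int (s j) - int (s i) - 1"] by simp
  qed
  have e1: "m * int (s j - 1) = m * int (s j) - m" using s1[of j] by (simp add: of_nat_diff algebra_simps)
  have e2: "m * (int (s j) - int (s i) - 1) = m * int (s j) - m * int (s i) - m" by (simp add: algebra_simps)
  have sjd: "int (s j) \<ge> int (s j) - int (s i)" by simp
  have vL: "v \<alpha> + v (of_nat (s j)) - m * int (s j - 1) + S \<le> 0"
  proof -
    have "S \<le> m * int (s j - 1) - v \<alpha> - w j"
      unfolding S_def
    proof (intro max.boundedI)
      show "int k - v \<alpha> + m * int (s i) \<le> m * int (s j - 1) - v \<alpha> - w j"
        using d md e1 e2 wj unfolding Kc_def by linarith
      show "w j - m + 1 \<le> m * int (s j - 1) - v \<alpha> - w j"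
        using d msj e1 sjd wj unfolding Kc_def by linarith
      show "1 - m \<le> m * int (s j - 1) - v \<alpha> - w j"
        using d msj e1 sjd wj unfolding Kc_def by linarith
    qed
    thus ?thesis by (simp add: w_def)
  qed
  have Sm: "S \<ge> - m" "S + m > v (of_nat (s j))" by (auto simp: S_def w_def)
  have frac: "Fj j \<inter> ball (x0 + \<rho>) S \<in> sets M \<and> measure M (Fj j \<inter> ball (x0 + \<rho>) S) = cc * measure M (ball (x0 + \<rho>) S)"
    if "\<rho> \<in> Rep (1 - m) T" for \<rho>
  proof -
    have x1: "x0 + \<rho> \<noteq> 0" "v (x0 + \<rho>) = - m" using B_shell[OF piece_in_B[OF that]] by auto
    note FR = Fset_fraction[OF aP al x1 Sm(1) s1 snz Sm(2) vL]
    have "real qq powr (- real_of_int S - real k) = cc * real qq powr (- real_of_int S)"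
    proof -
      have e: "- real_of_int S - real k = - real k + - real_of_int S" by simp
      have "real qq powr (- real_of_int S - real k) = real qq powr (- real k + - real_of_int S)"
        by (subst e) (rule refl)
      also have "\<dots> = real qq powr (- real k) * real qq powr (- real_of_int S)" by (rule powr_add)
      finally show ?thesis unfolding cc_def .
    qed
    thus ?thesis using FR by (simp add: Fj_def ball_measure)
  qed
  have const: "Fj i \<inter> ball (x0 + \<rho>) S = (if x0 + \<rho> \<in> Fj i then ball (x0 + \<rho>) S else {})"
    if "\<rho> \<in> Rep (1 - m) T" for \<rho>
    unfolding Fj_def by (rule const_piece[OF that ST]) (simp add: S_def)
  have p1: "\<And>\<rho>. \<rho> \<in> Rep (1 - m) T \<Longrightarrow> Fj j \<inter> ball (x0 + \<rho>) (1 - m + int T) \<in> sets M"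
    using frac ST by simp
  have p2: "\<And>\<rho>. \<rho> \<in> Rep (1 - m) T \<Longrightarrow> UNIV \<inter> ball (x0 + \<rho>) (1 - m + int T) \<in> sets M" by simp
  have p3: "\<And>\<rho>. \<rho> \<in> Rep (1 - m) T \<Longrightarrow> (Fj i \<inter> Fj j) \<inter> ball (x0 + \<rho>) (1 - m + int T) \<in> sets M"
  proof -
    fix \<rho> assume r: "\<rho> \<in> Rep (1 - m) T"
    have "(Fj i \<inter> Fj j) \<inter> ball (x0 + \<rho>) S = (if x0 + \<rho> \<in> Fj i then Fj j \<inter> ball (x0 + \<rho>) S else {})"
      using const[OF r] by auto
    thus "(Fj i \<inter> Fj j) \<inter> ball (x0 + \<rho>) (1 - m + int T) \<in> sets M" using frac[OF r] ST by simp
  qed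
  have p4: "\<And>\<rho>. \<rho> \<in> Rep (1 - m) T \<Longrightarrow> Fj i \<inter> ball (x0 + \<rho>) (1 - m + int T) \<in> sets M"
    using const ST by simp
  have "measure M (Fj j \<inter> B) = (\<Sum>\<rho>\<in>Rep (1 - m) T. measure M (Fj j \<inter> ball (x0 + \<rho>) (1 - m + int T)))"
    using partition_sum(2)[OF p1] by (simp add: B_def)
  also have "\<dots> = (\<Sum>\<rho>\<in>Rep (1 - m) T. cc * measure M (UNIV \<inter> ball (x0 + \<rho>) (1 - m + int T)))"
    by (rule sum.cong) (use frac ST in auto)
  also have "\<dots> = cc * measure M (UNIV \<inter> B)"
    using partition_sum(2)[OF p2] by (simp add: B_def sum_distrib_left)
  finally show "measure M (Fj j \<inter> B) = cc * measure M B" by simp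
  have "measure M (Fj i \<inter> (Fj j \<inter> B)) = measure M ((Fj i \<inter> Fj j) \<inter> B)" by (simp add: Int_assoc)
  also have "\<dots> = (\<Sum>\<rho>\<in>Rep (1 - m) T. measure M ((Fj i \<inter> Fj j) \<inter> ball (x0 + \<rho>) (1 - m + int T)))"
    using partition_sum(2)[OF p3] by (simp add: B_def)
  also have "\<dots> = (\<Sum>\<rho>\<in>Rep (1 - m) T. cc * measure M (Fj i \<inter> ball (x0 + \<rho>) (1 - m + int T)))"
  proof (rule sum.cong)
    fix \<rho> assume r: "\<rho> \<in> Rep (1 - m) T"
    have "(Fj i \<inter> Fj j) \<inter> ball (x0 + \<rho>) S = (if x0 + \<rho> \<in> Fj i then Fj j \<inter> ball (x0 + \<rho>) S else {})"
      using const[OF r] by auto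
    thus "measure M ((Fj i \<inter> Fj j) \<inter> ball (x0 + \<rho>) (1 - m + int T)) = cc * measure M (Fj i \<inter> ball (x0 + \<rho>) (1 - m + int T))"
      using frac[OF r] const[OF r] ST by simp
  qed simp
  also have "\<dots> = cc * measure M (Fj i \<inter> B)"
    using partition_sum(2)[OF p4] by (simp add: B_def sum_distrib_left)
  finally show "measure M (Fj i \<inter> (Fj j \<inter> B)) = cc * measure M (Fj i \<inter> B)" .
qed

end

lemma fourth_root_ex: "N \<ge> 1 \<Longrightarrow> \<exists>u::nat. u \<ge> 1 \<and> u ^ 4 \<le> N \<and> N < (u + 1) ^ 4"
proof (induction N)
  case 0 thus ?case by simp
next
  case (Suc N)
  show ?case
  proof (cases "N = 0")
    case True thus ?thesis by (intro exI[of _ 1]) (simp add: eval_nat_numeral)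
  next
    case False
    then obtain u where u: "u \<ge> 1" "u ^ 4 \<le> N" "N < (u + 1) ^ 4" using Suc.IH by auto
    show ?thesis
    proof (cases "Suc N < (u + 1) ^ 4")
      case True thus ?thesis using u by (intro exI[of _ u]) simp
    next
      case False
      hence e: "Suc N = (u + 1) ^ 4" using u(3) by simp
      have "(u + 1) ^ 4 < (u + 2) ^ 4" by (rule power_strict_mono) auto
      thus ?thesis using e by (intro exI[of _ "u + 1"]) simp
    qed
  qed
qed

lemma lip_bound:
  fixes a :: "nat \<Rightarrow> real"
  assumes "\<And>N. \<bar>a (Suc N) - a N\<bar> \<le> 1"
  shows "M \<le> N \<Longrightarrow> \<bar>a N - a M\<bar> \<le> real (N - M)"
proof (induction N)
  case 0 thus ?case by simp
next
  case (Suc N)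
  show ?case
  proof (cases "M = Suc N")
    case True thus ?thesis by simp
  next
    case False
    hence "M \<le> N" using Suc.prems by simp
    hence "\<bar>a N - a M\<bar> \<le> real (N - M)" using Suc.IH by simp
    moreover have "\<bar>a (Suc N) - a N\<bar> \<le> 1" by (rule assms)
    ultimately have "\<bar>a (Suc N) - a M\<bar> \<le> real (N - M) + 1" by linarith
    thus ?thesis using \<open>M \<le> N\<close> by (simp add: Suc_diff_le)
  qed
qed

lemma pow4_diff: "real ((u + 1) ^ 4) - real (u ^ 4) \<le> 15 * real u ^ 3" if "u \<ge> 1" for u :: nat
proof -
  have "real ((u + 1) ^ 4) - real (u ^ 4) = 4 * real u ^ 3 + 6 * real u ^ 2 + 4 * real u + 1"
    by (simp add: power_def algebra_simps)
  moreover have "real u ^ 2 \<le> real u ^ 3" "real u \<le> real u ^ 3" "1 \<le> real u ^ 3"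
    using that by (auto intro: power_increasing[of 1 _ "real u", simplified] power_increasing[of 2 3 "real u", simplified] one_le_power)
  ultimately show ?thesis by linarith
qed

lemma interp_limit:
  fixes a :: "nat \<Rightarrow> real"
  assumes lip: "\<And>N. \<bar>a (Suc N) - a N\<bar> \<le> 1"
    and sub: "\<And>i::nat. eventually (\<lambda>l. \<bar>a ((l + 1) ^ 4)\<bar> < real ((l + 1) ^ 4) / real (Suc i)) sequentially"
  shows "(\<lambda>N. a N / real N) \<longlonglongrightarrow> 0"
proof (rule LIMSEQ_I)
  fix r :: real assume r: "r > 0"
  obtain i :: nat where i: "1 / real (Suc i) < r / 2"
    using reals_Archimedean[of "r / 2"] r by (auto simp: inverse_eq_divide)
  obtain L where L: "\<And>l. l \<ge> L \<Longrightarrow> \<bar>a ((l + 1) ^ 4)\<bar> < real ((l + 1) ^ 4) / real (Suc i)"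
    using sub[of i] unfolding eventually_sequentially by blast
  obtain L2 :: nat where L2: "15 / real (Suc L2) < r / 2"
    using reals_Archimedean[of "r / 30"] r by (auto simp: inverse_eq_divide field_simps)
  define L3 where "L3 = max L L2"
  show "\<exists>no. \<forall>n\<ge>no. norm (a n / real n - 0) < r"
  proof (intro exI allI impI)
    fix N assume N: "N \<ge> (L3 + 1) ^ 4"
    hence N1: "N \<ge> 1" by (metis le_add2 one_le_power order_trans)
    obtain u where u: "u \<ge> 1" "u ^ 4 \<le> N" "N < (u + 1) ^ 4" using fourth_root_ex[OF N1] by blast
    have uL: "u \<ge> L3 + 1"
    proof (rule ccontr)
      assume "\<not> u \<ge> L3 + 1"
      hence "u + 1 \<le> L3 + 1" by simp
      hence "(u + 1) ^ 4 \<le> (L3 + 1) ^ 4" by (rule power_mono) simp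
      thus False using u(3) N by linarith
    qed
    define l where "l = u - 1"
    have lu: "l + 1 = u" using u(1) by (simp add: l_def)
    have lL: "l \<ge> L" using uL lu by (simp add: L3_def)
    have A: "\<bar>a (u ^ 4)\<bar> < real (u ^ 4) / real (Suc i)" using L[OF lL] unfolding lu .
    have B: "\<bar>a N - a (u ^ 4)\<bar> \<le> real (N - u ^ 4)" by (rule lip_bound[of a, OF lip u(2)])
    have C: "real (N - u ^ 4) \<le> 15 * real u ^ 3"
    proof -
      have c1: "real N \<le> real ((u + 1) ^ 4)" using u(3) by (simp only: of_nat_le_iff less_imp_le)
      show ?thesis using pow4_diff[OF u(1)] u(2) c1 by (simp add: of_nat_diff)
    qed
    have Npos: "real N > 0" using N1 by simp
    have uN: "real u ^ 4 \<le> real N" using u(2) by (metis of_nat_le_iff of_nat_power)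
    have upos: "real u > 0" using u(1) by simp
    have "\<bar>a N\<bar> < real (u ^ 4) / real (Suc i) + 15 * real u ^ 3" using A B C by linarith
    also have "\<dots> \<le> real N * (r / 2) + real N * (r / 2)"
    proof (rule add_mono)
      have "real (u ^ 4) / real (Suc i) \<le> real N / real (Suc i)" using u(2) by (simp add: divide_right_mono)
      also have "\<dots> = real N * (1 / real (Suc i))" by simp
      also have "\<dots> \<le> real N * (r / 2)" using i Npos by (intro mult_left_mono) auto
      finally show "real (u ^ 4) / real (Suc i) \<le> real N * (r / 2)" .
      have uL2: "real u \<ge> real (Suc L2)" using uL by (simp add: L3_def)
      have "15 * real u ^ 3 = real u ^ 4 * (15 / real u)" using upos by (simp add: field_simps power_def)
      also have "\<dots> \<le> real N * (15 / real (Suc L2))"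
        by (rule mult_mono[OF uN]) (use uL2 upos in \<open>auto simp: divide_left_mono\<close>)
      also have "\<dots> \<le> real N * (r / 2)" using L2 Npos by (intro mult_left_mono) auto
      finally show "15 * real u ^ 3 \<le> real N * (r / 2)" .
    qed
    also have "\<dots> = real N * r" by simp
    finally have "\<bar>a N\<bar> < real N * r" .
    thus "norm (a N / real N - 0) < r" using Npos by (simp add: abs_divide divide_less_eq mult.commute)
  qed
qed

lemma sym_double_sum:
  fixes f :: "nat \<Rightarrow> nat \<Rightarrow> real"
  assumes sym: "\<And>i j. f i j = f j i"
  shows "(\<Sum>i<N. \<Sum>j<N. f i j) = (\<Sum>j<N. f j j + 2 * (\<Sum>i<j. f i j))"
proof (induction N)
  case 0 thus ?case by simp
next
  case (Suc N)
  have "(\<Sum>i<Suc N. \<Sum>j<Suc N. f i j) = (\<Sum>i<N. \<Sum>j<N. f i j) + (\<Sum>i<N. f i N) + (\<Sum>j<N. f N j) + f N N"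
    by (simp add: sum.distrib)
  also have "(\<Sum>j<N. f N j) = (\<Sum>i<N. f i N)" using sym by simp
  finally show ?case using Suc.IH by simp
qed

context shell begin

definition g :: "nat \<Rightarrow> 'a \<Rightarrow> real" where
  "g j x = indicator (Fj j \<inter> B) x - cc * indicator B x"

lemma cc_pos: "cc > 0" using q_gt1 by (simp add: cc_def)
lemma cc_le1: "cc \<le> 1" using powr_mono[of "- real k" 0 "real qq"] q_gt1 by (simp add: cc_def)

lemma g_bound: "\<bar>g j x\<bar> \<le> indicator B x"
  using cc_pos cc_le1 by (cases "x \<in> B"; cases "x \<in> Fj j") (auto simp: g_def indicator_def)

lemma g_out: "x \<notin> B \<Longrightarrow> g j x = 0" by (simp add: g_def indicator_def)

lemma g_in: "x \<in> B \<Longrightarrow> g j x = indicator (Fj j) x - cc" by (simp add: g_def indicator_def)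

lemma sub_fin: "A \<subseteq> B \<Longrightarrow> emeasure M A < \<infinity>"
  using emeasure_mono[OF _ B_sets, of A] B_fin by (rule le_less_trans)

lemma FFB_sets[measurable]: "Fj i \<inter> (Fj j \<inter> B) \<in> sets M"
proof -
  have "Fj i \<inter> (Fj j \<inter> B) = (Fj i \<inter> B) \<inter> (Fj j \<inter> B)" by auto
  thus ?thesis using sets.Int[OF Fj_B_sets[of i] Fj_B_sets[of j]] by simp
qed

lemma g_prod: "g i x * g j x = indicator (Fj i \<inter> (Fj j \<inter> B)) x - cc * indicator (Fj i \<inter> B) x
   - cc * indicator (Fj j \<inter> B) x + cc ^ 2 * indicator B x"
  by (cases "x \<in> B"; cases "x \<in> Fj i"; cases "x \<in> Fj j") (simp_all add: indicator_def g_def algebra_simps power2_eq_square)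

lemma ind_int: "A \<subseteq> B \<Longrightarrow> A \<in> sets M \<Longrightarrow> integrable M (indicator A :: 'a \<Rightarrow> real)"
  using sub_fin by (intro integrable_real_indicator) auto

lemma g_meas[measurable]: "g j \<in> borel_measurable M"
  unfolding g_def by measurable

lemma gg_int: "integrable M (\<lambda>x. g i x * g j x)"
proof -
  have i1: "integrable M (indicator (Fj i \<inter> (Fj j \<inter> B)) :: 'a \<Rightarrow> real)" by (rule ind_int) auto
  have i2: "integrable M (indicator (Fj i \<inter> B) :: 'a \<Rightarrow> real)" by (rule ind_int) auto
  have i3: "integrable M (indicator (Fj j \<inter> B) :: 'a \<Rightarrow> real)" by (rule ind_int) auto
  have i4: "integrable M (indicator B :: 'a \<Rightarrow> real)" by (rule ind_int) auto
  show ?thesis unfolding g_prod using i1 i2 i3 i4 by auto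
qed

definition II :: "nat \<Rightarrow> nat \<Rightarrow> real" where "II i j = (\<integral>x. g i x * g j x \<partial>M)"

lemma II_sym: "II i j = II j i" by (simp add: II_def mult.commute)

lemma II_eq: "II i j = measure M (Fj i \<inter> (Fj j \<inter> B)) - cc * measure M (Fj i \<inter> B)
   - cc * measure M (Fj j \<inter> B) + cc ^ 2 * measure M B"
proof -
  have i1: "integrable M (indicator (Fj i \<inter> (Fj j \<inter> B)) :: 'a \<Rightarrow> real)" by (rule ind_int) auto
  have i2: "integrable M (indicator (Fj i \<inter> B) :: 'a \<Rightarrow> real)" by (rule ind_int) auto
  have i3: "integrable M (indicator (Fj j \<inter> B) :: 'a \<Rightarrow> real)" by (rule ind_int) auto
  have i4: "integrable M (indicator B :: 'a \<Rightarrow> real)" by (rule ind_int) auto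
  show ?thesis unfolding II_def g_prod using i1 i2 i3 i4 space_M by simp
qed

lemma II_good: "good i j \<Longrightarrow> II i j = 0"
  using good_measure[of i j] unfolding II_eq by (simp add: power2_eq_square algebra_simps)

lemma II_le: "II i j \<le> measure M B"
proof -
  have "II i j \<le> (\<integral>x. indicator B x \<partial>M)"
    unfolding II_def
  proof (rule integral_mono[OF gg_int])
    show "integrable M (\<lambda>x. indicator B x :: real)" by (rule ind_int) auto
    fix x
    have "g i x * g j x \<le> \<bar>g i x\<bar> * \<bar>g j x\<bar>" by (metis abs_ge_self abs_mult)
    also have "\<dots> \<le> indicator B x * indicator B x"
      by (intro mult_mono g_bound) auto
    also have "\<dots> = indicator B x" by (simp add: indicator_def)
    finally show "g i x * g j x \<le> indicator B x" .
  qed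
  thus ?thesis using space_M by simp
qed

lemma sq_int: "integrable M (\<lambda>x. (\<Sum>j<N. g j x) ^ 2)"
  and sq_integral: "(\<integral>x. (\<Sum>j<N. g j x) ^ 2 \<partial>M) = (\<Sum>i<N. \<Sum>j<N. II i j)"
proof -
  have e: "(\<Sum>j<N. g j x) ^ 2 = (\<Sum>i<N. \<Sum>j<N. g i x * g j x)" for x
    by (simp add: power2_eq_square sum_product)
  show "integrable M (\<lambda>x. (\<Sum>j<N. g j x) ^ 2)" unfolding e using gg_int by auto
  show "(\<integral>x. (\<Sum>j<N. g j x) ^ 2 \<partial>M) = (\<Sum>i<N. \<Sum>j<N. II i j)"
    unfolding e II_def by (simp add: integral_sum gg_int)
qed

lemma smono_gap: "i \<le> j \<Longrightarrow> int (s j) - int (s i) \<ge> int j - int i"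
proof -
  have "s (i + d) \<ge> s i + d" for d
  proof (induction d)
    case 0 thus ?case by simp
  next
    case (Suc d)
    have "s (i + d) < s (i + Suc d)" using smono by (simp add: strict_mono_def)
    thus ?case using Suc.IH by simp
  qed
  moreover assume ij: "i \<le> j"
  ultimately have "s j \<ge> s i + (j - i)" by (metis le_add_diff_inverse)
  hence "int (s j) \<ge> int (s i) + int (j - i)" by linarith
  moreover have "int (j - i) = int j - int i" using ij by simp
  ultimately show ?thesis by linarith
qed

lemma card_bad: "card {i \<in> {..<j}. \<not> good i j} \<le> nat (Kc + 2 * w j)"
proof -
  have "{i \<in> {..<j}. \<not> good i j} \<subseteq> {j - nat (Kc + 2 * w j)..<j}"
  proof
    fix i assume i: "i \<in> {i \<in> {..<j}. \<not> good i j}"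
    hence ij: "i < j" and "int (s j) - int (s i) < Kc + 2 * w j" by (auto simp: good_def)
    hence "int j - int i < Kc + 2 * w j" using smono_gap[of i j] by linarith
    hence "i \<ge> j - nat (Kc + 2 * w j)" by linarith
    thus "i \<in> {j - nat (Kc + 2 * w j)..<j}" using ij by simp
  qed
  hence "card {i \<in> {..<j}. \<not> good i j} \<le> card {j - nat (Kc + 2 * w j)..<j}" by (rule card_mono[rotated]) simp
  also have "\<dots> \<le> nat (Kc + 2 * w j)" by simp
  finally show ?thesis .
qed

lemma Kc_w_nonneg: "Kc + 2 * w j \<ge> 0" using w_nonneg[of j] by (simp add: Kc_def)

lemma var_bound: "(\<integral>x. (\<Sum>j<N. g j x) ^ 2 \<partial>M) \<le> measure M B * (\<Sum>j<N. 1 + 2 * real_of_int (Kc + 2 * w j))"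
proof -
  have mB: "measure M B \<ge> 0" by simp
  have "(\<integral>x. (\<Sum>j<N. g j x) ^ 2 \<partial>M) = (\<Sum>j<N. II j j + 2 * (\<Sum>i<j. II i j))"
    unfolding sq_integral by (rule sym_double_sum[OF II_sym])
  also have "\<dots> \<le> (\<Sum>j<N. measure M B * (1 + 2 * real_of_int (Kc + 2 * w j)))"
  proof (rule sum_mono)
    fix j
    have "(\<Sum>i<j. II i j) \<le> (\<Sum>i<j. if good i j then 0 else measure M B)"
      by (rule sum_mono) (auto simp: II_good II_le)
    also have "\<dots> = (\<Sum>i<j. if \<not> good i j then measure M B else 0)"
      by (rule sum.cong) auto
    also have "\<dots> = (\<Sum>i\<in>{i \<in> {..<j}. \<not> good i j}. measure M B)"
      by (rule sum.inter_filter[symmetric]) simp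
    also have "\<dots> = real (card {i \<in> {..<j}. \<not> good i j}) * measure M B" by simp
    also have "\<dots> \<le> real_of_int (Kc + 2 * w j) * measure M B"
      using card_bad[of j] Kc_w_nonneg[of j] mB by (intro mult_right_mono) linarith+
    finally have "(\<Sum>i<j. II i j) \<le> real_of_int (Kc + 2 * w j) * measure M B" .
    thus "II j j + 2 * (\<Sum>i<j. II i j) \<le> measure M B * (1 + 2 * real_of_int (Kc + 2 * w j))"
      using II_le[of j j] by (simp add: algebra_simps)
  qed
  also have "\<dots> = measure M B * (\<Sum>j<N. 1 + 2 * real_of_int (Kc + 2 * w j))"
    by (simp add: sum_distrib_left)
  finally show ?thesis .
qed

end

locale shellw = shell v prm C M \<alpha> x0 m a k s
  for v :: "'a::field \<Rightarrow> int" and prm C M \<alpha> x0 m a k s +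
  fixes W :: int
  assumes W0: "W \<ge> 0" and wb: "\<And>j l. j < l ^ 4 \<Longrightarrow> v (of_nat (s j) :: 'a) \<le> W * int (l ^ 2)"
begin

definition "DD = 1 + 2 * real_of_int Kc + 4 * real_of_int W"

lemma Kc_nonneg: "Kc \<ge> 1" by (simp add: Kc_def)

lemma sumw: "(\<Sum>j<l ^ 4. 1 + 2 * real_of_int (Kc + 2 * w j)) \<le> real (l ^ 4) * (DD * real l ^ 2)"
  if "l \<ge> 1"
proof -
  have "(\<Sum>j<l ^ 4. 1 + 2 * real_of_int (Kc + 2 * w j)) \<le> real (card {..<l ^ 4}) * (DD * real l ^ 2)"
  proof (rule sum_bounded_above)
    fix j assume "j \<in> {..<l ^ 4}"
    hence "w j \<le> W * int (l ^ 2)" using wb by (simp add: w_def)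
    hence "real_of_int (w j) \<le> real_of_int W * real l ^ 2" by (metis of_int_le_iff of_int_mult of_int_of_nat_eq of_nat_power)
    moreover have "real l ^ 2 \<ge> 1" using that by simp
    moreover have "real_of_int Kc \<ge> 0" using Kc_nonneg by simp
    ultimately have "1 + 2 * real_of_int Kc \<le> (1 + 2 * real_of_int Kc) * real l ^ 2"
      "4 * real_of_int (w j) \<le> 4 * real_of_int W * real l ^ 2" by (simp_all add: mult_le_cancel_left1)
    thus "1 + 2 * real_of_int (Kc + 2 * w j) \<le> DD * real l ^ 2" by (simp add: DD_def algebra_simps)
  qed
  thus ?thesis by simp
qed

lemma DD_pos: "DD \<ge> 1" using Kc_nonneg W0 by (simp add: DD_def)

lemma cheb:
  assumes e: "\<epsilon> > 0" and l: "l \<ge> 1"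
  shows "measure M {x \<in> space M. (\<epsilon> * real (l ^ 4)) ^ 2 \<le> (\<Sum>j<l ^ 4. g j x) ^ 2}
     \<le> measure M B * DD / (\<epsilon> ^ 2 * real l ^ 2)"
proof -
  define N where "N = l ^ 4"
  have Npos: "real N > 0" using l by (simp add: N_def)
  have cpos: "(\<epsilon> * real N) ^ 2 > 0" using e Npos by simp
  have "measure M {x \<in> space M. (\<epsilon> * real N) ^ 2 \<le> (\<Sum>j<N. g j x) ^ 2}
      \<le> (\<integral>x. (\<Sum>j<N. g j x) ^ 2 \<partial>M) / (\<epsilon> * real N) ^ 2"
    by (rule integral_Markov_inequality_measure[OF sq_int B_sets _ cpos]) simp
  also have "\<dots> \<le> (measure M B * (real N * (DD * real l ^ 2))) / (\<epsilon> * real N) ^ 2"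
  proof (rule divide_right_mono)
    have "(\<integral>x. (\<Sum>j<N. g j x) ^ 2 \<partial>M) \<le> measure M B * (\<Sum>j<N. 1 + 2 * real_of_int (Kc + 2 * w j))"
      by (rule var_bound)
    also have "\<dots> \<le> measure M B * (real N * (DD * real l ^ 2))"
      using sumw[OF l] by (intro mult_left_mono) (auto simp: N_def)
    finally show "(\<integral>x. (\<Sum>j<N. g j x) ^ 2 \<partial>M) \<le> measure M B * (real N * (DD * real l ^ 2))" .
  qed simp
  also have "\<dots> = measure M B * DD / (\<epsilon> ^ 2 * real l ^ 2)"
    using e l by (simp add: N_def field_simps power_def)
  finally show ?thesis by (simp add: N_def)
qed

lemma BC:
  assumes e: "\<epsilon> > 0"
  shows "AE x in M. eventually (\<lambda>l. (\<Sum>j<(l + 1) ^ 4. g j x) ^ 2 < (\<epsilon> * real ((l + 1) ^ 4)) ^ 2) sequentially"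
proof -
  define A where "A l = {x \<in> space M. (\<epsilon> * real ((l + 1) ^ 4)) ^ 2 \<le> (\<Sum>j<(l + 1) ^ 4. g j x) ^ 2}" for l
  have Asets: "A l \<in> sets M" for l unfolding A_def by measurable
  have AB: "A l \<subseteq> B" for l
  proof
    fix x assume x: "x \<in> A l"
    show "x \<in> B"
    proof (rule ccontr)
      assume "x \<notin> B"
      hence "(\<Sum>j<(l + 1) ^ 4. g j x) = 0" by (simp add: g_out)
      moreover have "(\<epsilon> * real ((l + 1) ^ 4)) ^ 2 > 0" using e by simp
      ultimately show False using x by (simp add: A_def)
    qed
  qed
  have Afin: "emeasure M (A l) < \<infinity>" for l by (rule sub_fin[OF AB])
  have sumI: "summable (\<lambda>l. inverse (real (Suc l) ^ 2))"
    using inverse_power_summable[of 2, where 'a = real] by (subst summable_Suc_iff) simp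
  have summ: "summable (\<lambda>l. measure M (A l))"
  proof (rule summable_comparison_test'[OF summable_mult[OF sumI, of "measure M B * DD / \<epsilon> ^ 2"]])
    fix l :: nat
    have "measure M (A l) \<le> measure M B * DD / (\<epsilon> ^ 2 * real (l + 1) ^ 2)"
      unfolding A_def by (rule cheb[OF e]) simp
    also have "\<dots> = measure M B * DD / \<epsilon> ^ 2 * inverse (real (Suc l) ^ 2)"
      by (simp add: field_simps)
    finally show "norm (measure M (A l)) \<le> measure M B * DD / \<epsilon> ^ 2 * inverse (real (Suc l) ^ 2)" by simp
  qed
  have "AE x in M. eventually (\<lambda>l. x \<in> space M - A l) sequentially"
    by (rule borel_cantelli_AE1[OF Asets Afin summ])
  thus ?thesis
    by eventually_elim (auto elim!: eventually_mono simp: A_def space_M not_le)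
qed

lemma main_shell:
  "AE x in M. x \<in> B \<longrightarrow> (\<lambda>N. (\<Sum>j<N. indicator (Fj j) x) / real N) \<longlonglongrightarrow> cc"
proof -
  have "AE x in M. \<forall>i::nat. eventually (\<lambda>l. (\<Sum>j<(l + 1) ^ 4. g j x) ^ 2 < (1 / real (Suc i) * real ((l + 1) ^ 4)) ^ 2) sequentially"
    by (rule AE_all_countable[THEN iffD2]) (intro allI BC, simp)
  thus ?thesis
  proof eventually_elim
    case (elim x)
    show ?case
    proof
      assume xB: "x \<in> B"
      define aa where "aa N = (\<Sum>j<N. g j x)" for N
      have lip: "\<bar>aa (Suc N) - aa N\<bar> \<le> 1" for N
        using g_bound[of N x] xB by (simp add: aa_def indicator_def)
      have sub: "eventually (\<lambda>l. \<bar>aa ((l + 1) ^ 4)\<bar> < real ((l + 1) ^ 4) / real (Suc i)) sequentially" for i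
        using elim[rule_format, of i]
      proof eventually_elim
        case (elim l)
        have "\<bar>aa ((l + 1) ^ 4)\<bar> ^ 2 < (real ((l + 1) ^ 4) / real (Suc i)) ^ 2"
          using elim by (simp add: aa_def)
        thus ?case by (rule power_less_imp_less_base) simp
      qed
      have lim0: "(\<lambda>N. aa N / real N) \<longlonglongrightarrow> 0" by (rule interp_limit[OF lip sub])
      have "(\<lambda>N. aa N / real N + cc) \<longlonglongrightarrow> 0 + cc" by (intro tendsto_add lim0 tendsto_const)
      moreover have "eventually (\<lambda>N. aa N / real N + cc = (\<Sum>j<N. indicator (Fj j) x) / real N) sequentially"
        using eventually_gt_at_top[of 0]
      proof eventually_elim
        case (elim N)
        have "aa N = (\<Sum>j<N. indicator (Fj j) x) - real N * cc"
          using xB by (simp add: aa_def g_in sum_subtractf)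
        thus ?case using elim by (simp add: field_simps)
      qed
      ultimately show "(\<lambda>N. (\<Sum>j<N. indicator (Fj j) x) / real N) \<longlonglongrightarrow> cc"
        by (simp add: tendsto_cong)
    qed
  qed
qed

end

context nalf begin

lemma one_P0: "(1::'a) \<in> P 0" by (simp add: P_def v1)

lemma gg_ex: "\<exists>g::nat. g > 0 \<and> (of_nat g :: 'a) \<in> P 1"
proof -
  define f where "f i = (THE c. c \<in> C \<and> (of_nat i :: 'a) - c \<in> P 1)" for i :: nat
  have fprop: "f i \<in> C \<and> (of_nat i :: 'a) - f i \<in> P 1" for i
    unfolding f_def by (rule theI'[OF resid'[OF of_nat_P0]])
  have "f ` {0..qq} \<subseteq> C" using fprop by auto
  hence "card (f ` {0..qq}) \<le> qq" using card_mono[OF finC] by (simp add: resq_def)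
  hence "card {0..qq} > card (f ` {0..qq})" by simp
  hence "\<not> inj_on f {0..qq}" by (rule pigeonhole)
  then obtain i j where ij: "i \<in> {0..qq}" "j \<in> {0..qq}" "i \<noteq> j" "f i = f j"
    unfolding inj_on_def by blast
  have key: "(of_nat j :: 'a) - of_nat i \<in> P 1"
    using P_diff[OF conjunct2[OF fprop[of j]] conjunct2[OF fprop[of i]]] ij(4) by simp
  show ?thesis
  proof (cases "i < j")
    case True
    have "(of_nat (j - i) :: 'a) = of_nat j - of_nat i" using True by (simp add: of_nat_diff)
    thus ?thesis using key True by (intro exI[of _ "j - i"]) simp
  next
    case False
    hence ji: "j < i" using ij(3) by simp
    have "(of_nat (i - j) :: 'a) = - (of_nat j - of_nat i)" using ji by (simp add: of_nat_diff)
    have "(of_nat i :: 'a) - of_nat j \<in> P 1" using key P_diff_commute by blast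
    thus ?thesis using ji by (intro exI[of _ "i - j"]) (simp add: of_nat_diff)
  qed
qed

definition gg :: nat where "gg = (LEAST g. g > 0 \<and> (of_nat g :: 'a) \<in> P 1)"

lemma gg_prop: "gg > 0 \<and> (of_nat gg :: 'a) \<in> P 1"
  unfolding gg_def by (rule LeastI_ex[OF gg_ex])

lemma gg_min: "g > 0 \<Longrightarrow> (of_nat g :: 'a) \<in> P 1 \<Longrightarrow> gg \<le> g"
  unfolding gg_def by (rule Least_le) simp

lemma gg_ne1: "gg \<noteq> 1" using gg_prop one_notin_P1 by auto

lemma gg_ge2: "gg \<ge> 2" using gg_prop gg_ne1 by linarith

lemma gg_dvd: assumes "(of_nat n :: 'a) \<in> P 1" shows "gg dvd n"
proof (rule ccontr)
  assume nd: "\<not> gg dvd n"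
  hence r: "n mod gg > 0" by (simp add: mod_greater_zero_iff_not_dvd)
  have e: "(of_nat (n mod gg) :: 'a) = of_nat n - of_nat gg * of_nat (n div gg)"
    by (metis add_diff_cancel_left' div_mult_mod_eq of_nat_add of_nat_mult mult.commute)
  have "(of_nat gg :: 'a) * of_nat (n div gg) \<in> P (1 + 0)" using P_mult[OF conjunct2[OF gg_prop] of_nat_P0] .
  hence "(of_nat (n mod gg) :: 'a) \<in> P 1" unfolding e using P_diff[OF assms] by simp
  hence "gg \<le> n mod gg" using gg_min r by blast
  moreover have "n mod gg < gg" using gg_prop by simp
  ultimately show False by simp
qed

lemma v_nat_bound:
  "n \<ge> 1 \<Longrightarrow> (of_nat n :: 'a) \<noteq> 0 \<Longrightarrow> \<exists>e. gg ^ e \<le> n \<and> v (of_nat n :: 'a) \<le> int e * max 0 (v (of_nat gg :: 'a))"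
proof (induction n rule: less_induct)
  case (less n)
  show ?case
  proof (cases "(of_nat n :: 'a) \<in> P 1")
    case False
    have "v (of_nat n :: 'a) \<le> 0" using False less.prems(2) by (simp add: P_def)
    thus ?thesis using less.prems(1) by (intro exI[of _ 0]) simp
  next
    case True
    obtain n' where n': "n = gg * n'" using gg_dvd[OF True] by blast
    have n'1: "n' \<ge> 1" using less.prems(1) n' by (cases n') auto
    have n'lt: "n' < n" using gg_ge2 n' n'1 by simp
    have nz: "(of_nat gg :: 'a) \<noteq> 0" "(of_nat n' :: 'a) \<noteq> 0" using less.prems(2) n' by auto
    obtain e where e: "gg ^ e \<le> n'" "v (of_nat n' :: 'a) \<le> int e * max 0 (v (of_nat gg :: 'a))"
      using less.IH[OF n'lt n'1 nz(2)] by blast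
    have "v (of_nat n :: 'a) = v (of_nat gg :: 'a) + v (of_nat n' :: 'a)" using n' vmult[OF nz] by simp
    also have "\<dots> \<le> int (Suc e) * max 0 (v (of_nat gg :: 'a))" using e(2) by (simp add: algebra_simps)
    finally have "v (of_nat n :: 'a) \<le> int (Suc e) * max 0 (v (of_nat gg :: 'a))" .
    moreover have "gg ^ Suc e \<le> n" using e(1) n' by simp
    ultimately show ?thesis by blast
  qed
qed

lemma e_bound: assumes "gg ^ e \<le> n" "n \<le> l ^ 4" shows "e \<le> 4 * l ^ 2"
proof -
  have "(2::nat) ^ e \<le> gg ^ e" using gg_ge2 by (simp add: power_mono)
  also have "\<dots> \<le> l ^ 4" using assms by simp
  also have "\<dots> \<le> (2 ^ l) ^ 4" by (rule power_mono) (simp_all add: less_imp_le)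
  also have "\<dots> = 2 ^ (4 * l)" by (simp add: power_mult[symmetric] mult.commute)
  finally have "e \<le> 4 * l" by simp
  also have "\<dots> \<le> 4 * l ^ 2" by (simp add: power2_eq_square)
  finally show ?thesis .
qed

lemma char0_bound:
  assumes "n \<ge> 1" "(of_nat n :: 'a) \<noteq> 0" "n \<le> l ^ 4"
  shows "v (of_nat n :: 'a) \<le> (4 * max 0 (v (of_nat gg :: 'a))) * int (l ^ 2)"
proof -
  obtain e where e: "gg ^ e \<le> n" "v (of_nat n :: 'a) \<le> int e * max 0 (v (of_nat gg :: 'a))"
    using v_nat_bound[OF assms(1,2)] by blast
  have "e \<le> 4 * l ^ 2" by (rule e_bound[OF e(1) assms(3)])
  hence "int e \<le> int (4 * l ^ 2)" by (simp only: of_nat_le_iff)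
  hence "int e * max 0 (v (of_nat gg :: 'a)) \<le> int (4 * l ^ 2) * max 0 (v (of_nat gg :: 'a))"
    by (intro mult_right_mono) auto
  thus ?thesis using e(2) by (simp add: algebra_simps)
qed

lemma charp_unit:
  assumes p: "CHAR('a) = p" "p > 0" and n: "\<not> p dvd n"
  shows "(of_nat n :: 'a) \<noteq> 0 \<and> v (of_nat n :: 'a) = 0"
proof -
  have nz: "(of_nat n :: 'a) \<noteq> 0" using n p by (simp add: of_nat_eq_0_iff_char_dvd)
  have pr: "prime p" using prime_CHAR_semidom[where 'a = 'a] p by simp
  have "(of_nat p :: 'a) = 0" using p by (simp add: of_nat_eq_0_iff_char_dvd)
  hence "gg dvd p" using gg_dvd by simp
  hence "gg = p" using pr gg_ne1 unfolding prime_nat_iff by blast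
  hence "(of_nat n :: 'a) \<notin> P 1" using gg_dvd n by blast
  moreover have "(of_nat n :: 'a) \<in> P 0" by (rule of_nat_P0)
  ultimately show ?thesis using nz by (simp add: P_def)
qed

end

lemma unif_distr_cong:
  assumes "\<And>n. n \<ge> 1 \<Longrightarrow> f n = g n"
  shows "unif_distr v C f \<longleftrightarrow> unif_distr v C g"
proof -
  have "{n \<in> {1..N}. f n \<in> D} = {n \<in> {1..N}. g n \<in> D}" for N D using assms by auto
  thus ?thesis unfolding unif_distr_def using assms by simp
qed

context nalf_haar begin

lemma shell_AE:
  assumes al: "\<alpha> \<noteq> 0" and c: "c \<in> C" "c \<noteq> 0" and mm: "mm \<ge> 1" and aP: "a \<in> P 0"
    and smono: "strict_mono s" and s1: "\<And>j. s j \<ge> 1" and snz: "\<And>j. (of_nat (s j) :: 'a) \<noteq> 0"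
    and W0: "W \<ge> 0" and wb: "\<And>j l. j < l ^ 4 \<Longrightarrow> v (of_nat (s j) :: 'a) \<le> W * int (l ^ 2)"
  shows "AE x in M. x \<in> ball (c * pw (- mm)) (1 - mm) \<longrightarrow>
     (\<lambda>N. (\<Sum>j<N. indicator (Fset \<alpha> (s j) a k) x) / real N) \<longlonglongrightarrow> real qq powr (- real k)"
proof -
  have x0nz: "c * pw (- mm) \<noteq> 0" using c by simp
  have vx0: "v (c * pw (- mm)) = - mm" using vmult[OF c(2) pw_nz] C_unit[OF c] by simp
  interpret sw: shellw v prm C M \<alpha> "c * pw (- mm)" mm a k s W
    by unfold_locales (use al x0nz vx0 mm aP smono s1 snz W0 wb in auto)
  show ?thesis using sw.main_shell unfolding sw.B_def sw.Fj_def sw.cc_def .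
qed

lemma gen:
  assumes al: "\<alpha> \<noteq> 0" and smono: "strict_mono s" and s1: "\<And>j. s j \<ge> 1"
    and snz: "\<And>j. (of_nat (s j) :: 'a) \<noteq> 0"
    and W0: "W \<ge> 0" and wb: "\<And>j l. j < l ^ 4 \<Longrightarrow> v (of_nat (s j) :: 'a) \<le> W * int (l ^ 2)"
  shows "AE x in M. absp v C x > 1 \<longrightarrow> unif_distr v C (\<lambda>n. intpart v prm C (\<alpha> * x ^ s (n - 1)))"
proof -
  define Q where "Q x mm kk c a \<longleftrightarrow> (c \<noteq> 0 \<longrightarrow> x \<in> ball (c * pw (- int (Suc mm))) (1 - int (Suc mm)) \<longrightarrow>
     (\<lambda>N. (\<Sum>j<N. indicator (Fset \<alpha> (s j) a kk) x) / real N) \<longlonglongrightarrow> real qq powr (- real kk))"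
    for x mm kk c a
  have "AE x in M. \<forall>mm. \<forall>kk. \<forall>c\<in>C. \<forall>a\<in>Rep 0 kk. Q x mm kk c a"
  proof (subst AE_all_countable, intro allI, subst AE_all_countable, intro allI)
    fix mm kk
    show "AE x in M. \<forall>c\<in>C. \<forall>a\<in>Rep 0 kk. Q x mm kk c a"
    proof (subst AE_ball_countable, rule countable_finite[OF finC], intro ballI)
      fix c assume c: "c \<in> C"
      show "AE x in M. \<forall>a\<in>Rep 0 kk. Q x mm kk c a"
      proof (subst AE_ball_countable, rule countable_finite[OF Rep_finite], intro ballI)
        fix a assume a: "a \<in> Rep 0 kk"
        show "AE x in M. Q x mm kk c a"
        proof (cases "c = 0")
          case True thus ?thesis by (simp add: Q_def)
        next
          case False
          have "AE x in M. x \<in> ball (c * pw (- int (Suc mm))) (1 - int (Suc mm)) \<longrightarrow>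
             (\<lambda>N. (\<Sum>j<N. indicator (Fset \<alpha> (s j) a kk) x) / real N) \<longlonglongrightarrow> real qq powr (- real kk)"
            by (rule shell_AE[OF al c False _ Rep_P[OF a] smono s1 snz W0 wb]) simp_all
          thus ?thesis by (simp add: Q_def)
        qed
      qed
    qed
  qed
  thus ?thesis
  proof eventually_elim
    case (elim x)
    show ?case
    proof
      assume "absp v C x > 1"
      hence xnz: "x \<noteq> 0" and vneg: "v x < 0" using absp_gt1_iff by auto
      define mm where "mm = nat (- v x) - 1"
      have mmv: "int (Suc mm) = - v x" using vneg by (simp add: mm_def)
      have xP: "x \<in> P (- int (Suc mm))" using mmv by (simp add: P_def)
      obtain c where c: "c \<in> C" "x - c * pw (- int (Suc mm)) \<in> P (- int (Suc mm) + 1)"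
        using digit[OF xP] by blast
      have cnz: "c \<noteq> 0"
      proof
        assume "c = 0"
        hence "x \<in> P (- int (Suc mm) + 1)" using c by simp
        thus False using xnz mmv by (simp add: P_def)
      qed
      have xB: "x \<in> ball (c * pw (- int (Suc mm))) (1 - int (Suc mm))"
        using c(2) by (simp add: mem_ball)
      show "unif_distr v C (\<lambda>n. intpart v prm C (\<alpha> * x ^ s (n - 1)))"
        unfolding unif_distr_def
      proof (intro conjI allI impI ballI)
        fix n :: nat show "intpart v prm C (\<alpha> * x ^ s (n - 1)) \<in> valring v"
          using intpart_P0 valring_P by simp
      next
        fix a kk assume a: "a \<in> valring v"
        obtain a' where a': "a' \<in> Rep 0 kk" "a - a' \<in> P (int kk)"
          using Rep_decomp[of a 0 kk] a valring_P by auto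
        have lim: "(\<lambda>N. (\<Sum>j<N. indicator (Fset \<alpha> (s j) a' kk) x) / real N) \<longlonglongrightarrow> real qq powr (- real kk)"
        proof -
          have "\<forall>c\<in>C. \<forall>a\<in>Rep 0 kk. Q x mm kk c a" using elim by blast
          hence "Q x mm kk c a'" using c(1) a'(1) by blast
          thus ?thesis using cnz xB by (simp add: Q_def)
        qed
        have memiff: "intpart v prm C (\<alpha> * x ^ s j) \<in> disc v C a (- int kk) \<longleftrightarrow> x \<in> Fset \<alpha> (s j) a' kk" for j
        proof -
          have "intpart v prm C (\<alpha> * x ^ s j) - a \<in> P (int kk) \<longleftrightarrow> intpart v prm C (\<alpha> * x ^ s j) - a' \<in> P (int kk)"
          proof
            assume "intpart v prm C (\<alpha> * x ^ s j) - a \<in> P (int kk)"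
            from P_add[OF this a'(2)] show "intpart v prm C (\<alpha> * x ^ s j) - a' \<in> P (int kk)" by simp
          next
            assume "intpart v prm C (\<alpha> * x ^ s j) - a' \<in> P (int kk)"
            from P_diff[OF this a'(2)] show "intpart v prm C (\<alpha> * x ^ s j) - a \<in> P (int kk)" by simp
          qed
          thus ?thesis by (simp add: disc_eq Fset_def Eset_def)
        qed
        have cardeq: "real (card {n \<in> {1..N}. intpart v prm C (\<alpha> * x ^ s (n - 1)) \<in> disc v C a (- int kk)})
            = (\<Sum>j<N. indicator (Fset \<alpha> (s j) a' kk) x)" for N
        proof -
          have "{n \<in> {1..N}. intpart v prm C (\<alpha> * x ^ s (n - 1)) \<in> disc v C a (- int kk)}
              = Suc ` {j \<in> {..<N}. x \<in> Fset \<alpha> (s j) a' kk}"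
          proof (rule set_eqI)
            fix n
            show "n \<in> {n \<in> {1..N}. intpart v prm C (\<alpha> * x ^ s (n - 1)) \<in> disc v C a (- int kk)} \<longleftrightarrow>
                n \<in> Suc ` {j \<in> {..<N}. x \<in> Fset \<alpha> (s j) a' kk}"
              using memiff[of "n - 1"] by (cases n) (auto simp: memiff)
          qed
          hence "card {n \<in> {1..N}. intpart v prm C (\<alpha> * x ^ s (n - 1)) \<in> disc v C a (- int kk)}
              = card {j \<in> {..<N}. x \<in> Fset \<alpha> (s j) a' kk}" by (simp add: card_image)
          moreover have "(\<Sum>j<N. indicator (Fset \<alpha> (s j) a' kk) x) = real (card {j \<in> {..<N}. x \<in> Fset \<alpha> (s j) a' kk})"
          proof -
            have "(\<Sum>j<N. indicator (Fset \<alpha> (s j) a' kk) x :: real) = (\<Sum>j<N. if x \<in> Fset \<alpha> (s j) a' kk then 1 else 0)"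
              by (rule sum.cong) (simp_all add: indicator_def)
            also have "\<dots> = (\<Sum>j\<in>{j \<in> {..<N}. x \<in> Fset \<alpha> (s j) a' kk}. 1)"
              by (rule sum.inter_filter[symmetric]) simp
            also have "\<dots> = real (card {j \<in> {..<N}. x \<in> Fset \<alpha> (s j) a' kk})" by simp
            finally show ?thesis .
          qed
          ultimately show ?thesis by simp
        qed
        show "(\<lambda>N. real (card {n \<in> {1..N}. intpart v prm C (\<alpha> * x ^ s (n - 1)) \<in> disc v C a (- int kk)}) / real N)
            \<longlonglongrightarrow> real (resq C) powr - real kk"
          unfolding cardeq using lim by simp
      qed
    qed
  qed
qed

end

theorem theorem1p1:
  fixes v :: "'a::field \<Rightarrow> int" and prm :: 'a and C :: "'a set"
    and M :: "'a measure" and \<alpha> :: 'a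
  assumes "nonarch_local_field v prm C"
    and "haar_p v C M"
    and "\<alpha> \<noteq> 0"
  shows "(CHAR('a) = 0 \<longrightarrow>
           (AE x in M. absp v C x > 1 \<longrightarrow>
              unif_distr v C (\<lambda>n. intpart v prm C (\<alpha> * x ^ n))))
       \<and> (\<forall>p. CHAR('a) = p \<and> p > 0 \<longrightarrow>
           (AE x in M. absp v C x > 1 \<longrightarrow>
              unif_distr v C (\<lambda>m. intpart v prm C
                 (\<alpha> * x ^ enumerate {n. n \<ge> 1 \<and> \<not> p dvd n} (m - 1)))))"
proof -
  interpret nh: nalf_haar v prm C M
    by unfold_locales (use assms in auto)
  show ?thesis
  proof (intro conjI allI impI)
    assume ch: "CHAR('a) = 0"
    define s where "s j = Suc j" for j
    have snz: "(of_nat (s j) :: 'a) \<noteq> 0" for j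
    proof -
      have "\<not> (CHAR('a) dvd s j)" using ch by (simp add: s_def)
      thus ?thesis by (metis of_nat_eq_0_iff_char_dvd)
    qed
    have wb: "v (of_nat (s j) :: 'a) \<le> (4 * max 0 (v (of_nat nh.gg :: 'a))) * int (l ^ 2)" if "j < l ^ 4" for j l
      by (rule nh.char0_bound[OF _ snz]) (use that in \<open>simp_all add: s_def\<close>)
    have "AE x in M. absp v C x > 1 \<longrightarrow> unif_distr v C (\<lambda>n. intpart v prm C (\<alpha> * x ^ s (n - 1)))"
      by (rule nh.gen[OF assms(3) _ _ snz _ wb]) (auto simp: s_def strict_mono_def)
    thus "AE x in M. absp v C x > 1 \<longrightarrow> unif_distr v C (\<lambda>n. intpart v prm C (\<alpha> * x ^ n))"
    proof (rule eventually_mono, intro impI)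
      fix x assume h: "absp v C x > 1 \<longrightarrow> unif_distr v C (\<lambda>n. intpart v prm C (\<alpha> * x ^ s (n - 1)))"
        and gt: "absp v C x > 1"
      have "unif_distr v C (\<lambda>n. intpart v prm C (\<alpha> * x ^ s (n - 1))) = unif_distr v C (\<lambda>n. intpart v prm C (\<alpha> * x ^ n))"
        by (rule unif_distr_cong) (simp add: s_def)
      thus "unif_distr v C (\<lambda>n. intpart v prm C (\<alpha> * x ^ n))" using h gt by simp
    qed
  next
    fix p assume ch: "CHAR('a) = p \<and> p > 0"
    define S where "S = {n. n \<ge> 1 \<and> \<not> p dvd n}"
    define s where "s j = enumerate S j" for j
    have inf: "infinite S"
    proof -
      have p1: "p \<noteq> 1"
      proof
        assume "p = 1"
        hence "(of_nat 1 :: 'a) = 0" using ch by (simp only: of_nat_eq_0_iff_char_dvd) simp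
        thus False by simp
      qed
      have "\<not> p dvd (p * t + 1)" for t
      proof
        assume "p dvd (p * t + 1)"
        hence "p dvd 1" using dvd_add_right_iff[of p "p * t" 1] by simp
        thus False using p1 by simp
      qed
      hence "range (\<lambda>t. p * t + 1) \<subseteq> S" by (auto simp: S_def)
      moreover have "inj (\<lambda>t. p * t + 1)" using ch by (auto simp: inj_def)
      ultimately show ?thesis by (meson infinite_iff_countable_subset)
    qed
    have sS: "s j \<in> S" for j unfolding s_def by (rule enumerate_in_set[OF inf])
    have smono: "strict_mono s" unfolding s_def strict_mono_def using enumerate_mono[OF _ inf] by blast
    have s1: "s j \<ge> 1" for j using sS[of j] by (simp add: S_def)
    have un: "(of_nat (s j) :: 'a) \<noteq> 0 \<and> v (of_nat (s j) :: 'a) = 0" for j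
      using nh.charp_unit[of p "s j"] ch sS[of j] by (simp add: S_def)
    have "AE x in M. absp v C x > 1 \<longrightarrow> unif_distr v C (\<lambda>n. intpart v prm C (\<alpha> * x ^ s (n - 1)))"
      by (rule nh.gen[OF assms(3) smono s1 _ _ ]) (use un in auto)
    thus "AE x in M. absp v C x > 1 \<longrightarrow> unif_distr v C (\<lambda>m. intpart v prm C
                 (\<alpha> * x ^ enumerate {n. n \<ge> 1 \<and> \<not> p dvd n} (m - 1)))"
      by (simp add: s_def S_def)
  qed
qed

end
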